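(* Let $n>3$ and let $L$ and ${}^*L=e^{\sigma(x)}L+\beta$ be as in the context. Then ${}^*M_{ij}=M_{ij}-\frac{1}{2\,{}^*L}H_{ij}$.
   Context: $M$ is a smooth manifold of dimension $n$ with local coordinates $(x^i)$ and induced fiber coordinates $(y^i)$ on $TM$. $L(x,y)$ is a Finsler metric: positive and smooth for $y\neq0$, positively homogeneous of degree 1 in $y$, with positive definite fundamental tensor $g_{ij}=\frac12\frac{\partial^2L^2}{\partial y^i\partial y^j}$ and inverse $g^{ij}$. $\sigma(x)$ is a smooth function on $M$ and $\beta(x,y)=b_i(x)y^i$ is a 1-form; the conformal $\beta$-change is ${}^*L=e^{\sigma(x)}L+\beta$, assumed to be again a Finsler metric. Notation: $l_i=\partial L/\partial y^i$, $l^i=g^{ij}l_j$, $h_{ij}=g_{ij}-l_il_j$, $c_{ijk}=\frac12\partial g_{ij}/\partial y^k$, $c_i{}^r{}_j=g^{rk}c_{ijk}$, $b^i=g^{ij}b_j$, $m_i=b_i-\frac{\beta}{L}l_i$, $m^i=g^{ij}m_j$, $m^2=m_im^i$, $H_{ij}=c_i{}^r{}_jm_r+\frac{1}{2\,{}^*L}m_im_j+\frac{1}{4\,{}^*L}h_{ij}m^2$. $S_{hijk}=c_{ijr}c_h{}^r{}_k-c_{ikr}c_h{}^r{}_j$, $S_{ik}=g^{hj}S_{hijk}$, $S=g^{ik}S_{ik}$, $M_{ij}=\frac{1}{n-3}\big[S_{ij}-\frac{S\,h_{ij}}{2(n-2)}\big]$. Quantities built from ${}^*L$ by the same formulas (using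 ${}^*g_{ij}$ and its inverse ${}^*g^{ij}$) are denoted with a left asterisk. *)

theory Defs
  imports "HOL-Analysis.Analysis"
begin

definition dirD :: "('a::real_normed_vector \<Rightarrow> real) \<Rightarrow> 'a \<Rightarrow> 'a \<Rightarrow> real" where
  "dirD f v p = deriv (\<lambda>t. f (p + t *\<^sub>R v)) 0"

fun iterD :: "'a::real_normed_vector list \<Rightarrow> ('a \<Rightarrow> real) \<Rightarrow> 'a \<Rightarrow> real" where
  "iterD [] f = f"
| "iterD (v # vs) f = dirD (iterD vs f) v"

definition smooth_on :: "'a::euclidean_space set \<Rightarrow> ('a \<Rightarrow> real) \<Rightarrow> bool" where
  "smooth_on S f \<longleftrightarrow> open S \<and>
     (\<forall>vs. set vs \<subseteq> Basis \<longrightarrow> (\<forall>p\<in>S. iterD vs f differentiable (at p)))"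

section \<open>Fibre quantities of a Finsler function F = L(x,.) at fixed x\<close>

definition pdy :: "'n::finite \<Rightarrow> (real^'n \<Rightarrow> real) \<Rightarrow> real^'n \<Rightarrow> real" where
  "pdy i F = dirD F (axis i 1)"

definition fund :: "(real^'n::finite \<Rightarrow> real) \<Rightarrow> 'n \<Rightarrow> 'n \<Rightarrow> real^'n \<Rightarrow> real" where
  "fund F i j y = 1/2 * pdy i (pdy j (\<lambda>z. (F z)^2)) y"

definition gmat :: "(real^'n::finite \<Rightarrow> real) \<Rightarrow> real^'n \<Rightarrow> real^'n^'n" where
  "gmat F y = (\<chi> i j. fund F i j y)"

definition ginv :: "(real^'n::finite \<Rightarrow> real) \<Rightarrow> 'n \<Rightarrow> 'n \<Rightarrow> real^'n \<Rightarrow> real" where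
  "ginv F i j y = matrix_inv (gmat F y) $ i $ j"

definition lcov :: "(real^'n::finite \<Rightarrow> real) \<Rightarrow> 'n \<Rightarrow> real^'n \<Rightarrow> real" where
  "lcov F i y = pdy i F y"

definition hang :: "(real^'n::finite \<Rightarrow> real) \<Rightarrow> 'n \<Rightarrow> 'n \<Rightarrow> real^'n \<Rightarrow> real" where
  "hang F i j y = fund F i j y - lcov F i y * lcov F j y"

definition cten :: "(real^'n::finite \<Rightarrow> real) \<Rightarrow> 'n \<Rightarrow> 'n \<Rightarrow> 'n \<Rightarrow> real^'n \<Rightarrow> real" where
  "cten F i j k y = 1/2 * pdy k (fund F i j) y"

definition cmix :: "(real^'n::finite \<Rightarrow> real) \<Rightarrow> 'n \<Rightarrow> 'n \<Rightarrow> 'n \<Rightarrow> real^'n \<Rightarrow> real" where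
  "cmix F i r j y = (\<Sum>k\<in>UNIV. ginv F r k y * cten F i j k y)"

definition S4 :: "(real^'n::finite \<Rightarrow> real) \<Rightarrow> 'n \<Rightarrow> 'n \<Rightarrow> 'n \<Rightarrow> 'n \<Rightarrow> real^'n \<Rightarrow> real" where
  "S4 F h i j k y = (\<Sum>r\<in>UNIV. cten F i j r y * cmix F h r k y - cten F i k r y * cmix F h r j y)"

definition S2 :: "(real^'n::finite \<Rightarrow> real) \<Rightarrow> 'n \<Rightarrow> 'n \<Rightarrow> real^'n \<Rightarrow> real" where
  "S2 F i k y = (\<Sum>h\<in>UNIV. \<Sum>j\<in>UNIV. ginv F h j y * S4 F h i j k y)"

definition S0 :: "(real^'n::finite \<Rightarrow> real) \<Rightarrow> real^'n \<Rightarrow> real" where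
  "S0 F y = (\<Sum>i\<in>UNIV. \<Sum>k\<in>UNIV. ginv F i k y * S2 F i k y)"

definition Mten :: "(real^'n::finite \<Rightarrow> real) \<Rightarrow> 'n \<Rightarrow> 'n \<Rightarrow> real^'n \<Rightarrow> real" where
  "Mten F i j y = 1 / (real CARD('n) - 3) *
     (S2 F i j y - S0 F y * hang F i j y / (2 * (real CARD('n) - 2)))"

text \<open>Here F = L(x,.), bv = (b_i(x)), Fs = *L(x,.).\<close>
definition betaf :: "real^'n::finite \<Rightarrow> real^'n \<Rightarrow> real" where
  "betaf bv y = (\<Sum>i\<in>UNIV. bv $ i * y $ i)"

definition mcov :: "(real^'n::finite \<Rightarrow> real) \<Rightarrow> real^'n \<Rightarrow> 'n \<Rightarrow> real^'n \<Rightarrow> real" where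
  "mcov F bv i y = bv $ i - betaf bv y / F y * lcov F i y"

definition mcon :: "(real^'n::finite \<Rightarrow> real) \<Rightarrow> real^'n \<Rightarrow> 'n \<Rightarrow> real^'n \<Rightarrow> real" where
  "mcon F bv i y = (\<Sum>j\<in>UNIV. ginv F i j y * mcov F bv j y)"

definition msq :: "(real^'n::finite \<Rightarrow> real) \<Rightarrow> real^'n \<Rightarrow> real^'n \<Rightarrow> real" where
  "msq F bv y = (\<Sum>i\<in>UNIV. mcov F bv i y * mcon F bv i y)"

definition Hten :: "(real^'n::finite \<Rightarrow> real) \<Rightarrow> (real^'n \<Rightarrow> real) \<Rightarrow> real^'n \<Rightarrow> 'n \<Rightarrow> 'n \<Rightarrow> real^'n \<Rightarrow> real" where
  "Hten F Fs bv i j y =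
     (\<Sum>r\<in>UNIV. cmix F i r j y * mcov F bv r y)
     + mcov F bv i y * mcov F bv j y / (2 * Fs y)
     + hang F i j y * msq F bv y / (4 * Fs y)"

section \<open>Finsler metric on a coordinate chart U (an open subset of R^n) of M\<close>

definition finsler_on :: "(real^'n::finite) set \<Rightarrow> (real^'n \<Rightarrow> real^'n \<Rightarrow> real) \<Rightarrow> bool" where
  "finsler_on U L \<longleftrightarrow>
     open U \<and>
     smooth_on {p :: (real^'n) \<times> (real^'n). fst p \<in> U \<and> snd p \<noteq> 0} (\<lambda>p. L (fst p) (snd p)) \<and>
     (\<forall>x\<in>U. \<forall>y. y \<noteq> 0 \<longrightarrow> L x y > 0) \<and>
     (\<forall>x\<in>U. \<forall>y. y \<noteq> 0 \<longrightarrow> (\<forall>t>0. L x (t *\<^sub>R y) = t * L x y)) \<and>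
     (\<forall>x\<in>U. \<forall>y. y \<noteq> 0 \<longrightarrow>
        (\<forall>v::real^'n. v \<noteq> 0 \<longrightarrow> (\<Sum>i\<in>UNIV. \<Sum>j\<in>UNIV. fund (L x) i j y * v $ i * v $ j) > 0))"

definition conf_beta :: "(real^'n::finite \<Rightarrow> real) \<Rightarrow> (real^'n \<Rightarrow> real^'n) \<Rightarrow>
    (real^'n \<Rightarrow> real^'n \<Rightarrow> real) \<Rightarrow> real^'n \<Rightarrow> real^'n \<Rightarrow> real" where
  "conf_beta \<sigma> b L x y = exp (\<sigma> x) * L x y + betaf (b x) y"

end

theory Submission
  imports Defs
begin


lemma delta_kill:
  fixes f y :: "'n::finite \<Rightarrow> real"
  shows "(\<Sum>j\<in>UNIV. f j * ((if j = k then 1 else 0) - y j * wk)) = f k - wk * (\<Sum>j\<in>UNIV. f j * y j)"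
proof -
  have "(\<Sum>j\<in>UNIV. f j * ((if j = k then 1 else 0) - y j * wk))
      = (\<Sum>j\<in>UNIV. (if j = k then f j else 0) - wk * (f j * y j))"
    by (rule sum.cong) (auto simp: algebra_simps)
  also have "\<dots> = f k - wk * (\<Sum>j\<in>UNIV. f j * y j)"
    by (simp add: sum_subtractf sum_distrib_left)
  finally show ?thesis .
qed

lemma swap_in2:
  fixes f :: "'a \<Rightarrow> real" and X :: "'a \<Rightarrow> 'b \<Rightarrow> 'c \<Rightarrow> real"
  assumes "finite A" "finite B" "finite C"
  shows "(\<Sum>h\<in>A. f h * (\<Sum>r\<in>B. \<Sum>s\<in>C. X h r s)) = (\<Sum>r\<in>B. \<Sum>s\<in>C. \<Sum>h\<in>A. f h * X h r s)"
proof -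
  have "(\<Sum>h\<in>A. f h * (\<Sum>r\<in>B. \<Sum>s\<in>C. X h r s)) = (\<Sum>h\<in>A. \<Sum>r\<in>B. \<Sum>s\<in>C. f h * X h r s)"
    by (simp add: sum_distrib_left)
  also have "\<dots> = (\<Sum>r\<in>B. \<Sum>h\<in>A. \<Sum>s\<in>C. f h * X h r s)" by (rule sum.swap)
  also have "\<dots> = (\<Sum>r\<in>B. \<Sum>s\<in>C. \<Sum>h\<in>A. f h * X h r s)" by (rule sum.cong[OF refl], rule sum.swap)
  finally show ?thesis .
qed

lemma swap_in1:
  fixes f :: "'a \<Rightarrow> real" and X :: "'a \<Rightarrow> 'b \<Rightarrow> real"
  shows "(\<Sum>h\<in>A. f h * (\<Sum>r\<in>B. X h r)) = (\<Sum>r\<in>B. \<Sum>h\<in>A. f h * X h r)"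
  by (simp add: sum_distrib_left sum.swap[of _ A])

section \<open>Abstract algebra\<close>

definition sym3 :: "('n \<Rightarrow> 'n \<Rightarrow> 'n \<Rightarrow> real) \<Rightarrow> bool" where
  "sym3 d \<longleftrightarrow> (\<forall>i j k. d i j k = d j i k \<and> d i j k = d i k j)"

definition ykill :: "('n::finite \<Rightarrow> real) \<Rightarrow> ('n \<Rightarrow> 'n \<Rightarrow> 'n \<Rightarrow> real) \<Rightarrow> bool" where
  "ykill y d \<longleftrightarrow> (\<forall>i j. (\<Sum>r\<in>UNIV. d i j r * y r) = 0)"

definition rai :: "('n::finite \<Rightarrow> 'n \<Rightarrow> real) \<Rightarrow> ('n \<Rightarrow> real) \<Rightarrow> 'n \<Rightarrow> real" where
  "rai gi v r = (\<Sum>s\<in>UNIV. gi r s * v s)"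

definition Eup :: "('n::finite \<Rightarrow> 'n \<Rightarrow> real) \<Rightarrow> ('n \<Rightarrow> 'n \<Rightarrow> 'n \<Rightarrow> real) \<Rightarrow> 'n \<Rightarrow> 'n \<Rightarrow> 'n \<Rightarrow> real" where
  "Eup gi e j r k = (\<Sum>h\<in>UNIV. \<Sum>s\<in>UNIV. gi h j * gi r s * e h k s)"

definition Gt :: "('n::finite \<Rightarrow> 'n \<Rightarrow> real) \<Rightarrow> ('n \<Rightarrow> 'n \<Rightarrow> 'n \<Rightarrow> real) \<Rightarrow> ('n \<Rightarrow> 'n \<Rightarrow> 'n \<Rightarrow> real) \<Rightarrow> 'n \<Rightarrow> 'n \<Rightarrow> real" where
  "Gt gi d e i k = (\<Sum>h\<in>UNIV. \<Sum>j\<in>UNIV. \<Sum>r\<in>UNIV. \<Sum>s\<in>UNIV. gi h j * gi r s * d i j r * e h k s)"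

definition Gp :: "('n::finite \<Rightarrow> 'n \<Rightarrow> real) \<Rightarrow> ('n \<Rightarrow> 'n \<Rightarrow> 'n \<Rightarrow> real) \<Rightarrow> ('n \<Rightarrow> 'n \<Rightarrow> 'n \<Rightarrow> real) \<Rightarrow> 'n \<Rightarrow> 'n \<Rightarrow> real" where
  "Gp gi d e i k = (\<Sum>h\<in>UNIV. \<Sum>j\<in>UNIV. \<Sum>r\<in>UNIV. \<Sum>s\<in>UNIV. gi h j * gi r s * d i k r * e h j s)"

definition trc :: "('n::finite \<Rightarrow> 'n \<Rightarrow> real) \<Rightarrow> ('n \<Rightarrow> 'n \<Rightarrow> 'n \<Rightarrow> real) \<Rightarrow> 'n \<Rightarrow> real" where
  "trc gi e s = (\<Sum>h\<in>UNIV. \<Sum>j\<in>UNIV. gi h j * e h j s)"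

definition cmv :: "('n::finite \<Rightarrow> 'n \<Rightarrow> real) \<Rightarrow> ('n \<Rightarrow> 'n \<Rightarrow> 'n \<Rightarrow> real) \<Rightarrow> ('n \<Rightarrow> real) \<Rightarrow> 'n \<Rightarrow> 'n \<Rightarrow> real" where
  "cmv gi d v i k = (\<Sum>r\<in>UNIV. d i k r * rai gi v r)"

definition mu0 :: "('n \<Rightarrow> 'n \<Rightarrow> real) \<Rightarrow> ('n \<Rightarrow> real) \<Rightarrow> 'n \<Rightarrow> 'n \<Rightarrow> 'n \<Rightarrow> real" where
  "mu0 hh m i j k = hh i j * m k + hh i k * m j + hh j k * m i"

lemma sym3D:
  assumes "sym3 d"
  shows "d i j k = d j i k" "d i j k = d i k j" "d i j k = d k j i" "d i j k = d j k i" "d i j k = d k i j"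
  using assms unfolding sym3_def by metis+

lemma ykillD:
  assumes "sym3 d" "ykill y d"
  shows "(\<Sum>r\<in>UNIV. d i j r * y r) = 0" "(\<Sum>r\<in>UNIV. d i r j * y r) = 0" "(\<Sum>r\<in>UNIV. d r i j * y r) = 0"
proof -
  show 1: "(\<Sum>r\<in>UNIV. d i j r * y r) = 0" using assms(2) unfolding ykill_def by blast
  show "(\<Sum>r\<in>UNIV. d i r j * y r) = 0"
    using assms(2) unfolding ykill_def by (metis (no_types, lifting) assms(1) sum.cong sym3D(2))
  show "(\<Sum>r\<in>UNIV. d r i j * y r) = 0"
    using assms(2) unfolding ykill_def by (metis (no_types, lifting) assms(1) sum.cong sym3D(4))
qed

lemma Gt_Eup: "Gt gi d e i k = (\<Sum>j\<in>UNIV. \<Sum>r\<in>UNIV. d i j r * Eup gi e j r k)"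
proof -
  have "Gt gi d e i k = (\<Sum>j\<in>UNIV. \<Sum>h\<in>UNIV. \<Sum>r\<in>UNIV. \<Sum>s\<in>UNIV. gi h j * gi r s * d i j r * e h k s)"
    unfolding Gt_def by (rule sum.swap)
  also have "\<dots> = (\<Sum>j\<in>UNIV. \<Sum>r\<in>UNIV. \<Sum>h\<in>UNIV. \<Sum>s\<in>UNIV. gi h j * gi r s * d i j r * e h k s)"
    by (rule sum.cong[OF refl], rule sum.swap)
  also have "\<dots> = (\<Sum>j\<in>UNIV. \<Sum>r\<in>UNIV. d i j r * Eup gi e j r k)"
    unfolding Eup_def by (simp add: sum_distrib_left ac_simps)
  finally show ?thesis .
qed

lemma Gp_trc: "Gp gi d e i k = (\<Sum>r\<in>UNIV. d i k r * rai gi (trc gi e) r)"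
proof -
  have "Gp gi d e i k = (\<Sum>h\<in>UNIV. \<Sum>r\<in>UNIV. \<Sum>j\<in>UNIV. \<Sum>s\<in>UNIV. gi h j * gi r s * d i k r * e h j s)"
    unfolding Gp_def by (rule sum.cong[OF refl], rule sum.swap)
  also have "\<dots> = (\<Sum>r\<in>UNIV. \<Sum>h\<in>UNIV. \<Sum>j\<in>UNIV. \<Sum>s\<in>UNIV. gi h j * gi r s * d i k r * e h j s)"
    by (rule sum.swap)
  also have "\<dots> = (\<Sum>r\<in>UNIV. \<Sum>h\<in>UNIV. \<Sum>s\<in>UNIV. \<Sum>j\<in>UNIV. gi h j * gi r s * d i k r * e h j s)"
    by (rule sum.cong[OF refl], rule sum.cong[OF refl], rule sum.swap)
  also have "\<dots> = (\<Sum>r\<in>UNIV. \<Sum>s\<in>UNIV. \<Sum>h\<in>UNIV. \<Sum>j\<in>UNIV. gi h j * gi r s * d i k r * e h j s)"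
    by (rule sum.cong[OF refl], rule sum.swap)
  also have "\<dots> = (\<Sum>r\<in>UNIV. d i k r * rai gi (trc gi e) r)"
    unfolding rai_def trc_def by (simp add: sum_distrib_left ac_simps)
  finally show ?thesis .
qed

locale ctx =
  fixes gi hh :: "'n::finite \<Rightarrow> 'n \<Rightarrow> real" and y w m :: "'n \<Rightarrow> real"
  assumes gi_sym: "\<And>a b. gi a b = gi b a" and h_sym: "\<And>a b. hh a b = hh b a"
  and hu: "\<And>a b. (\<Sum>j\<in>UNIV. gi a j * hh j b) = (if a = b then 1 else 0) - y a * w b"
  and hy: "\<And>a. (\<Sum>b\<in>UNIV. hh a b * y b) = 0"
  and my: "(\<Sum>a\<in>UNIV. m a * y a) = 0"
  and yw: "(\<Sum>a\<in>UNIV. y a * w a) = 1"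
begin

lemma hu_kill:
  assumes "(\<Sum>a\<in>UNIV. v a * y a) = 0"
  shows "(\<Sum>a\<in>UNIV. v a * (\<Sum>j\<in>UNIV. gi a j * hh j b)) = v b"
  using delta_kill[of v b y "w b"] assms by (simp add: hu)

lemma hu_kill':
  assumes "(\<Sum>a\<in>UNIV. v a * y a) = 0"
  shows "(\<Sum>a\<in>UNIV. v a * (\<Sum>j\<in>UNIV. gi j a * hh b j)) = v b"
  using hu_kill[OF assms, of b] by (simp add: gi_sym h_sym)

lemma rai_kill:
  assumes "(\<Sum>a\<in>UNIV. v a * y a) = 0"
  shows "(\<Sum>r\<in>UNIV. hh i r * rai gi v r) = v i"
proof -
  have "(\<Sum>r\<in>UNIV. hh i r * rai gi v r) = (\<Sum>r\<in>UNIV. \<Sum>s\<in>UNIV. hh i r * gi r s * v s)"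
    unfolding rai_def by (simp add: sum_distrib_left ac_simps)
  also have "\<dots> = (\<Sum>s\<in>UNIV. \<Sum>r\<in>UNIV. hh i r * gi r s * v s)" by (rule sum.swap)
  also have "\<dots> = (\<Sum>s\<in>UNIV. v s * (\<Sum>r\<in>UNIV. gi s r * hh r i))"
    by (simp add: sum_distrib_left ac_simps gi_sym h_sym)
  also have "\<dots> = v i" by (rule hu_kill[OF assms])
  finally show ?thesis .
qed

lemma trace_h: "(\<Sum>h\<in>UNIV. \<Sum>j\<in>UNIV. gi h j * hh j h) = real CARD('n) - 1"
proof -
  have "(\<Sum>h\<in>UNIV. \<Sum>j\<in>UNIV. gi h j * hh j h) = (\<Sum>h\<in>UNIV. 1 - y h * w h)"
    by (simp add: hu)
  also have "\<dots> = real CARD('n) - 1" by (simp add: sum_subtractf yw)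
  finally show ?thesis .
qed

lemma ghg: "(\<Sum>h\<in>UNIV. \<Sum>s\<in>UNIV. gi h j * gi r s * hh h s) = gi r j - y j * (\<Sum>s\<in>UNIV. gi r s * w s)"
proof -
  have "(\<Sum>h\<in>UNIV. \<Sum>s\<in>UNIV. gi h j * gi r s * hh h s) = (\<Sum>s\<in>UNIV. \<Sum>h\<in>UNIV. gi h j * gi r s * hh h s)"
    by (rule sum.swap)
  also have "\<dots> = (\<Sum>s\<in>UNIV. gi r s * (\<Sum>h\<in>UNIV. gi j h * hh h s))"
    by (simp add: sum_distrib_left ac_simps gi_sym)
  also have "\<dots> = (\<Sum>s\<in>UNIV. gi r s * ((if j = s then 1 else 0) - y j * w s))"
    by (simp add: hu)
  also have "\<dots> = (\<Sum>s\<in>UNIV. (if s = j then gi r s else 0) - y j * (gi r s * w s))"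
    by (rule sum.cong) (auto simp: algebra_simps)
  also have "\<dots> = gi r j - y j * (\<Sum>s\<in>UNIV. gi r s * w s)"
    by (simp add: sum_subtractf sum_distrib_left)
  finally show ?thesis .
qed

lemma Eup_mu0:
  "Eup gi (mu0 hh m) j r k = ((if j = k then 1 else 0) - y j * w k) * rai gi m r
     + (gi r j - y j * (\<Sum>s\<in>UNIV. gi r s * w s)) * m k
     + ((if r = k then 1 else 0) - y r * w k) * rai gi m j"
proof -
  have "Eup gi (mu0 hh m) j r k =
      (\<Sum>h\<in>UNIV. \<Sum>s\<in>UNIV. gi h j * gi r s * hh h k * m s)
    + (\<Sum>h\<in>UNIV. \<Sum>s\<in>UNIV. gi h j * gi r s * hh h s) * m k
    + (\<Sum>h\<in>UNIV. \<Sum>s\<in>UNIV. gi h j * gi r s * hh k s * m h)"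
    unfolding Eup_def mu0_def by (simp add: algebra_simps sum.distrib sum_distrib_right sum_distrib_left)
  also have "(\<Sum>h\<in>UNIV. \<Sum>s\<in>UNIV. gi h j * gi r s * hh h k * m s)
     = (\<Sum>h\<in>UNIV. \<Sum>s\<in>UNIV. (gi j h * hh h k) * (gi r s * m s))"
    by (intro sum.cong refl) (subst gi_sym, simp add: mult_ac)
  also have "\<dots> = (\<Sum>h\<in>UNIV. gi j h * hh h k) * rai gi m r"
    by (simp only: rai_def sum_product)
  also have "(\<Sum>h\<in>UNIV. \<Sum>s\<in>UNIV. gi h j * gi r s * hh k s * m h)
     = (\<Sum>h\<in>UNIV. \<Sum>s\<in>UNIV. (gi j h * m h) * (gi r s * hh s k))"
    by (intro sum.cong refl) (subst gi_sym, subst h_sym, simp add: mult_ac)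
  also have "\<dots> = (\<Sum>s\<in>UNIV. gi r s * hh s k) * rai gi m j"
    by (simp only: rai_def sum_product mult.commute)
  finally show ?thesis by (simp add: hu ghg)
qed


lemma mu0_sym: "sym3 (mu0 hh m)"
  unfolding sym3_def mu0_def by (auto simp: h_sym algebra_simps)

lemma mu0_kill: "ykill y (mu0 hh m)"
proof -
  have "(\<Sum>r\<in>UNIV. mu0 hh m i j r * y r) = 0" for i j
  proof -
    have "(\<Sum>r\<in>UNIV. mu0 hh m i j r * y r) = hh i j * (\<Sum>r\<in>UNIV. m r * y r) + m j * (\<Sum>r\<in>UNIV. hh i r * y r)
       + m i * (\<Sum>r\<in>UNIV. hh j r * y r)"
      unfolding mu0_def by (simp add: algebra_simps sum.distrib sum_distrib_left)
    then show ?thesis by (simp add: hy my)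
  qed
  then show ?thesis unfolding ykill_def by blast
qed

lemma Gt_mu0:
  assumes sd: "sym3 d" and kd: "ykill y d"
  shows "Gt gi d (mu0 hh m) i k = 2 * cmv gi d m i k + m k * trc gi d i"
proof -
  define W where "W r = (\<Sum>s\<in>UNIV. gi r s * w s)" for r
  have "Gt gi d (mu0 hh m) i k = (\<Sum>j\<in>UNIV. \<Sum>r\<in>UNIV. d i j r * ((if j = k then 1 else 0) - y j * w k) * rai gi m r)
     + m k * (\<Sum>j\<in>UNIV. \<Sum>r\<in>UNIV. d i j r * (gi r j - y j * W r))
     + (\<Sum>j\<in>UNIV. \<Sum>r\<in>UNIV. d i j r * ((if r = k then 1 else 0) - y r * w k) * rai gi m j)"
    unfolding Gt_Eup Eup_mu0 W_def by (simp only: distrib_left sum.distrib sum_distrib_left mult_ac)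
  also have "(\<Sum>j\<in>UNIV. \<Sum>r\<in>UNIV. d i j r * ((if j = k then 1 else 0) - y j * w k) * rai gi m r)
      = cmv gi d m i k"
  proof -
    have "(\<Sum>j\<in>UNIV. \<Sum>r\<in>UNIV. d i j r * ((if j = k then 1 else 0) - y j * w k) * rai gi m r)
        = (\<Sum>r\<in>UNIV. \<Sum>j\<in>UNIV. d i j r * ((if j = k then 1 else 0) - y j * w k) * rai gi m r)"
      by (rule sum.swap)
    also have "\<dots> = (\<Sum>r\<in>UNIV. rai gi m r * (\<Sum>j\<in>UNIV. d i j r * ((if j = k then 1 else 0) - y j * w k)))"
      by (simp only: sum_distrib_left mult_ac)
    also have "\<dots> = (\<Sum>r\<in>UNIV. rai gi m r * d i k r)"
      by (simp add: delta_kill ykillD(2)[OF sd kd])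
    finally show ?thesis unfolding cmv_def by (simp add: mult_ac)
  qed
  also have "(\<Sum>j\<in>UNIV. \<Sum>r\<in>UNIV. d i j r * (gi r j - y j * W r)) = trc gi d i"
  proof -
    have "(\<Sum>j\<in>UNIV. \<Sum>r\<in>UNIV. d i j r * (gi r j - y j * W r))
       = (\<Sum>j\<in>UNIV. \<Sum>r\<in>UNIV. d i j r * gi r j) - (\<Sum>j\<in>UNIV. \<Sum>r\<in>UNIV. d i j r * y j * W r)"
      by (simp add: right_diff_distrib sum_subtractf mult_ac)
    also have "(\<Sum>j\<in>UNIV. \<Sum>r\<in>UNIV. d i j r * y j * W r) = (\<Sum>r\<in>UNIV. \<Sum>j\<in>UNIV. d i j r * y j * W r)"
      by (rule sum.swap)
    also have "\<dots> = (\<Sum>r\<in>UNIV. W r * (\<Sum>j\<in>UNIV. d i j r * y j))"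
      by (simp only: sum_distrib_left mult_ac)
    also have "\<dots> = 0" by (simp add: ykillD(2)[OF sd kd])
    also have "(\<Sum>j\<in>UNIV. \<Sum>r\<in>UNIV. d i j r * gi r j) = trc gi d i"
      unfolding trc_def
      by (intro sum.cong refl) (metis gi_sym sym3D(4)[OF sd] mult.commute)
    finally show ?thesis by simp
  qed
  also have "(\<Sum>j\<in>UNIV. \<Sum>r\<in>UNIV. d i j r * ((if r = k then 1 else 0) - y r * w k) * rai gi m j)
      = cmv gi d m i k"
  proof -
    have "(\<Sum>j\<in>UNIV. \<Sum>r\<in>UNIV. d i j r * ((if r = k then 1 else 0) - y r * w k) * rai gi m j)
       = (\<Sum>j\<in>UNIV. rai gi m j * (\<Sum>r\<in>UNIV. d i j r * ((if r = k then 1 else 0) - y r * w k)))"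
      by (simp only: sum_distrib_left mult_ac)
    also have "\<dots> = (\<Sum>j\<in>UNIV. rai gi m j * d i j k)"
      by (simp add: delta_kill ykillD(1)[OF sd kd])
    finally show ?thesis unfolding cmv_def
      by (metis (no_types, lifting) sum.cong sym3D(2)[OF sd] mult.commute)
  qed
  finally show ?thesis by simp
qed

lemma Gt_sym:
  assumes sd: "sym3 d" and se: "sym3 e"
  shows "Gt gi d e i k = Gt gi e d k i"
proof -
  have "Gt gi e d k i = (\<Sum>j\<in>UNIV. \<Sum>h\<in>UNIV. \<Sum>s\<in>UNIV. \<Sum>r\<in>UNIV. gi h j * gi r s * d i j r * e h k s)"
  proof -
    have "gi j h * gi s r * e k h s * d j i r = gi h j * gi r s * d i j r * e h k s" for h j r s
      using gi_sym[of j h] gi_sym[of s r] sym3D(1)[OF se, of k h s] sym3D(1)[OF sd, of j i r]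
      by (simp add: mult_ac)
    then show ?thesis unfolding Gt_def by simp
  qed
  also have "\<dots> = (\<Sum>h\<in>UNIV. \<Sum>j\<in>UNIV. \<Sum>s\<in>UNIV. \<Sum>r\<in>UNIV. gi h j * gi r s * d i j r * e h k s)"
    by (rule sum.swap)
  also have "\<dots> = Gt gi d e i k"
    unfolding Gt_def by (rule sum.cong[OF refl], rule sum.cong[OF refl], rule sum.swap)
  finally show ?thesis by simp
qed

lemma trc_mu0: "trc gi (mu0 hh m) s = (real CARD('n) + 1) * m s"
proof -
  have "trc gi (mu0 hh m) s = m s * (\<Sum>h\<in>UNIV. \<Sum>j\<in>UNIV. gi h j * hh j h)
     + (\<Sum>h\<in>UNIV. \<Sum>j\<in>UNIV. gi h j * hh h s * m j) + (\<Sum>h\<in>UNIV. \<Sum>j\<in>UNIV. gi h j * hh j s * m h)"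
    unfolding trc_def mu0_def by (simp add: algebra_simps sum.distrib sum_distrib_left h_sym)
  also have "(\<Sum>h\<in>UNIV. \<Sum>j\<in>UNIV. gi h j * hh h s * m j) = (\<Sum>j\<in>UNIV. \<Sum>h\<in>UNIV. gi h j * hh h s * m j)"
    by (rule sum.swap)
  also have "\<dots> = (\<Sum>j\<in>UNIV. m j * (\<Sum>h\<in>UNIV. gi j h * hh h s))"
    by (simp only: sum_distrib_left) (intro sum.cong refl, subst gi_sym, simp add: mult_ac)
  also have "\<dots> = m s" by (rule hu_kill[OF my])
  also have "(\<Sum>h\<in>UNIV. \<Sum>j\<in>UNIV. gi h j * hh j s * m h) = (\<Sum>h\<in>UNIV. m h * (\<Sum>j\<in>UNIV. gi h j * hh j s))"
    by (simp add: sum_distrib_left mult_ac)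
  also have "\<dots> = m s" by (rule hu_kill[OF my])
  finally show ?thesis by (simp add: trace_h algebra_simps)
qed

lemma cmv_mu0:
  assumes "(\<Sum>a\<in>UNIV. v a * y a) = 0"
  shows "cmv gi (mu0 hh m) v i k = hh i k * (\<Sum>r\<in>UNIV. m r * rai gi v r) + m k * v i + m i * v k"
proof -
  have "cmv gi (mu0 hh m) v i k = hh i k * (\<Sum>r\<in>UNIV. m r * rai gi v r)
     + m k * (\<Sum>r\<in>UNIV. hh i r * rai gi v r) + m i * (\<Sum>r\<in>UNIV. hh k r * rai gi v r)"
    unfolding cmv_def mu0_def by (simp add: algebra_simps sum.distrib sum_distrib_left)
  then show ?thesis by (simp add: rai_kill[OF assms])
qed

lemma trc_kill:
  assumes sd: "sym3 d" and kd: "ykill y d"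
  shows "(\<Sum>s\<in>UNIV. trc gi d s * y s) = 0"
proof -
  have "(\<Sum>s\<in>UNIV. trc gi d s * y s) = (\<Sum>s\<in>UNIV. y s * (\<Sum>h\<in>UNIV. \<Sum>j\<in>UNIV. gi h j * d h j s))"
    unfolding trc_def by (simp add: mult_ac)
  also have "\<dots> = (\<Sum>h\<in>UNIV. \<Sum>j\<in>UNIV. \<Sum>s\<in>UNIV. y s * (gi h j * d h j s))"
    by (rule swap_in2) auto
  also have "\<dots> = (\<Sum>h\<in>UNIV. \<Sum>j\<in>UNIV. gi h j * (\<Sum>s\<in>UNIV. d h j s * y s))"
    by (simp add: sum_distrib_left mult_ac)
  also have "\<dots> = 0" by (simp add: ykillD(1)[OF sd kd])
  finally show ?thesis .
qed

lemma Gp_mu0: "Gp gi d (mu0 hh m) i k = (real CARD('n) + 1) * cmv gi d m i k"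
  unfolding Gp_trc cmv_def rai_def trc_mu0 by (simp add: sum_distrib_left mult_ac)


lemma rai_swap: "(\<Sum>r\<in>UNIV. u r * rai gi v r) = (\<Sum>r\<in>UNIV. v r * rai gi u r)"
proof -
  have "(\<Sum>r\<in>UNIV. u r * rai gi v r) = (\<Sum>r\<in>UNIV. \<Sum>s\<in>UNIV. u r * gi r s * v s)"
    unfolding rai_def by (simp add: sum_distrib_left mult_ac)
  also have "\<dots> = (\<Sum>s\<in>UNIV. \<Sum>r\<in>UNIV. u r * gi r s * v s)" by (rule sum.swap)
  also have "\<dots> = (\<Sum>r\<in>UNIV. v r * rai gi u r)"
    unfolding rai_def by (simp only: sum_distrib_left) (intro sum.cong refl, subst gi_sym, simp add: mult_ac)
  finally show ?thesis .
qed

lemma S2_expand: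
  assumes sc: "sym3 c" and kc: "ykill y c"
  shows "Gt gi (\<lambda>a b e. c a b e + \<kappa> * mu0 hh m a b e) (\<lambda>a b e. c a b e + \<kappa> * mu0 hh m a b e) i k
       - Gp gi (\<lambda>a b e. c a b e + \<kappa> * mu0 hh m a b e) (\<lambda>a b e. c a b e + \<kappa> * mu0 hh m a b e) i k
     = (Gt gi c c i k - Gp gi c c i k)
       + \<kappa> * ((3 - real CARD('n)) * cmv gi c m i k - hh i k * (\<Sum>r\<in>UNIV. trc gi c r * rai gi m r))
       + \<kappa>^2 * ((1 - real CARD('n)) * (\<Sum>r\<in>UNIV. m r * rai gi m r) * hh i k
                 + (3 - real CARD('n)) * m i * m k)"
proof -
  let ?n = "real CARD('n)"
  let ?C = "trc gi c"
  let ?m2 = "(\<Sum>r\<in>UNIV. m r * rai gi m r)"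
  have e1: "Gt gi (\<lambda>a b e. c a b e + \<kappa> * mu0 hh m a b e) (\<lambda>a b e. c a b e + \<kappa> * mu0 hh m a b e) i k
     = Gt gi c c i k + \<kappa> * Gt gi c (mu0 hh m) i k + \<kappa> * Gt gi (mu0 hh m) c i k + \<kappa>^2 * Gt gi (mu0 hh m) (mu0 hh m) i k"
    unfolding Gt_def by (simp add: algebra_simps sum.distrib sum_distrib_left power2_eq_square)
  have e2: "Gp gi (\<lambda>a b e. c a b e + \<kappa> * mu0 hh m a b e) (\<lambda>a b e. c a b e + \<kappa> * mu0 hh m a b e) i k
     = Gp gi c c i k + \<kappa> * Gp gi c (mu0 hh m) i k + \<kappa> * Gp gi (mu0 hh m) c i k + \<kappa>^2 * Gp gi (mu0 hh m) (mu0 hh m) i k"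
    unfolding Gp_def by (simp add: algebra_simps sum.distrib sum_distrib_left power2_eq_square)
  have a1: "Gt gi c (mu0 hh m) i k = 2 * cmv gi c m i k + m k * ?C i"
    by (rule Gt_mu0[OF sc kc])
  have a2: "Gt gi (mu0 hh m) c i k = 2 * cmv gi c m i k + m i * ?C k"
  proof -
    have "Gt gi (mu0 hh m) c i k = Gt gi c (mu0 hh m) k i" by (rule Gt_sym[OF mu0_sym sc])
    also have "\<dots> = 2 * cmv gi c m k i + m i * ?C k" by (rule Gt_mu0[OF sc kc])
    also have "cmv gi c m k i = cmv gi c m i k" unfolding cmv_def using sym3D(1)[OF sc] by simp
    finally show ?thesis .
  qed
  have a3: "Gp gi c (mu0 hh m) i k = (?n + 1) * cmv gi c m i k" by (rule Gp_mu0)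
  have a4: "Gp gi (mu0 hh m) c i k = hh i k * (\<Sum>r\<in>UNIV. ?C r * rai gi m r) + m k * ?C i + m i * ?C k"
  proof -
    have "Gp gi (mu0 hh m) c i k = cmv gi (mu0 hh m) ?C i k" unfolding Gp_trc cmv_def ..
    also have "\<dots> = hh i k * (\<Sum>r\<in>UNIV. m r * rai gi ?C r) + m k * ?C i + m i * ?C k"
      by (rule cmv_mu0[OF trc_kill[OF sc kc]])
    finally show ?thesis by (simp add: rai_swap)
  qed
  have a5: "Gt gi (mu0 hh m) (mu0 hh m) i k = 2 * (hh i k * ?m2 + m k * m i + m i * m k) + m k * ((?n + 1) * m i)"
    by (simp add: Gt_mu0[OF mu0_sym mu0_kill] cmv_mu0[OF my] trc_mu0)
  have a6: "Gp gi (mu0 hh m) (mu0 hh m) i k = (?n + 1) * (hh i k * ?m2 + m k * m i + m i * m k)"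
    by (simp add: Gp_mu0 cmv_mu0[OF my])
  show ?thesis unfolding e1 e2 a1 a2 a3 a4 a5 a6 by (simp add: algebra_simps power2_eq_square)
qed

end

lemma swap3out:
  "(\<Sum>h\<in>A. \<Sum>j\<in>B. \<Sum>r\<in>C. X h j r) = (\<Sum>r\<in>C. \<Sum>h\<in>A. \<Sum>j\<in>B. (X h j r::real))"
proof -
  have "(\<Sum>h\<in>A. \<Sum>j\<in>B. \<Sum>r\<in>C. X h j r) = (\<Sum>h\<in>A. \<Sum>r\<in>C. \<Sum>j\<in>B. X h j r)"
    by (rule sum.cong[OF refl], rule sum.swap)
  also have "\<dots> = (\<Sum>r\<in>C. \<Sum>h\<in>A. \<Sum>j\<in>B. X h j r)" by (rule sum.swap)
  finally show ?thesis .
qed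

context ctx begin

lemma trace_expand:
  "(\<Sum>i\<in>UNIV. \<Sum>k\<in>UNIV. gi i k * (A i k
       + \<kappa> * ((3 - real CARD('n)) * cmv gi c m i k - hh i k * (\<Sum>r\<in>UNIV. trc gi c r * rai gi m r))
       + \<kappa>^2 * ((1 - real CARD('n)) * (\<Sum>r\<in>UNIV. m r * rai gi m r) * hh i k
                 + (3 - real CARD('n)) * m i * m k)))
   = (\<Sum>i\<in>UNIV. \<Sum>k\<in>UNIV. gi i k * A i k)
     + \<kappa> * ((3 - real CARD('n)) - (real CARD('n) - 1)) * (\<Sum>r\<in>UNIV. trc gi c r * rai gi m r)
     + \<kappa>^2 * ((1 - real CARD('n)) * (real CARD('n) - 1) + (3 - real CARD('n))) * (\<Sum>r\<in>UNIV. m r * rai gi m r)"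
proof -
  let ?n = "real CARD('n)"
  let ?CM = "(\<Sum>r\<in>UNIV. trc gi c r * rai gi m r)"
  let ?m2 = "(\<Sum>r\<in>UNIV. m r * rai gi m r)"
  have t1: "(\<Sum>i\<in>UNIV. \<Sum>k\<in>UNIV. gi i k * cmv gi c m i k) = ?CM"
  proof -
    have "(\<Sum>i\<in>UNIV. \<Sum>k\<in>UNIV. gi i k * cmv gi c m i k) = (\<Sum>i\<in>UNIV. \<Sum>k\<in>UNIV. \<Sum>r\<in>UNIV. rai gi m r * (gi i k * c i k r))"
      unfolding cmv_def by (simp add: sum_distrib_left mult_ac)
    also have "\<dots> = (\<Sum>r\<in>UNIV. \<Sum>i\<in>UNIV. \<Sum>k\<in>UNIV. rai gi m r * (gi i k * c i k r))" by (rule swap3out)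
    also have "\<dots> = ?CM" unfolding trc_def by (simp add: sum_distrib_left mult_ac)
    finally show ?thesis .
  qed
  have t2: "(\<Sum>i\<in>UNIV. \<Sum>k\<in>UNIV. gi i k * hh i k) = ?n - 1"
    using trace_h by (simp add: h_sym)
  have t3: "(\<Sum>i\<in>UNIV. \<Sum>k\<in>UNIV. gi i k * (m i * m k)) = ?m2"
    unfolding rai_def by (simp add: sum_distrib_left mult_ac)
  have "(\<Sum>i\<in>UNIV. \<Sum>k\<in>UNIV. gi i k * (A i k
       + \<kappa> * ((3 - ?n) * cmv gi c m i k - hh i k * ?CM)
       + \<kappa>^2 * ((1 - ?n) * ?m2 * hh i k + (3 - ?n) * m i * m k)))
     = (\<Sum>i\<in>UNIV. \<Sum>k\<in>UNIV. gi i k * A i k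
       + (\<kappa> * (3 - ?n)) * (gi i k * cmv gi c m i k)
       - (\<kappa> * ?CM) * (gi i k * hh i k)
       + (\<kappa>^2 * (1 - ?n) * ?m2) * (gi i k * hh i k)
       + (\<kappa>^2 * (3 - ?n)) * (gi i k * (m i * m k)))"
    by (intro sum.cong refl) (simp add: algebra_simps)
  also have "\<dots> = (\<Sum>i\<in>UNIV. \<Sum>k\<in>UNIV. gi i k * A i k)
       + \<kappa> * (3 - ?n) * (\<Sum>i\<in>UNIV. \<Sum>k\<in>UNIV. gi i k * cmv gi c m i k)
       - \<kappa> * ?CM * (\<Sum>i\<in>UNIV. \<Sum>k\<in>UNIV. gi i k * hh i k)
       + \<kappa>^2 * (1 - ?n) * ?m2 * (\<Sum>i\<in>UNIV. \<Sum>k\<in>UNIV. gi i k * hh i k)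
       + \<kappa>^2 * (3 - ?n) * (\<Sum>i\<in>UNIV. \<Sum>k\<in>UNIV. gi i k * (m i * m k))"
    by (simp only: sum.distrib sum_subtractf sum_distrib_left[symmetric])
  also have "\<dots> = (\<Sum>i\<in>UNIV. \<Sum>k\<in>UNIV. gi i k * A i k)
     + \<kappa> * ((3 - ?n) - (?n - 1)) * ?CM + \<kappa>^2 * ((1 - ?n) * (?n - 1) + (3 - ?n)) * ?m2"
    unfolding t1 t2 t3 by (simp add: algebra_simps)
  finally show ?thesis .
qed

end

section \<open>The S-tensors in abstract form\<close>

definition S4g :: "('n::finite \<Rightarrow> 'n \<Rightarrow> real) \<Rightarrow> ('n \<Rightarrow> 'n \<Rightarrow> 'n \<Rightarrow> real) \<Rightarrow> 'n \<Rightarrow> 'n \<Rightarrow> 'n \<Rightarrow> 'n \<Rightarrow> real" where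
  "S4g gi c h i j k = (\<Sum>r\<in>UNIV. c i j r * (\<Sum>s\<in>UNIV. gi r s * c h k s) - c i k r * (\<Sum>s\<in>UNIV. gi r s * c h j s))"

definition S2g :: "('n::finite \<Rightarrow> 'n \<Rightarrow> real) \<Rightarrow> ('n \<Rightarrow> 'n \<Rightarrow> 'n \<Rightarrow> real) \<Rightarrow> 'n \<Rightarrow> 'n \<Rightarrow> real" where
  "S2g gi c i k = (\<Sum>h\<in>UNIV. \<Sum>j\<in>UNIV. gi h j * S4g gi c h i j k)"

definition S0g :: "('n::finite \<Rightarrow> 'n \<Rightarrow> real) \<Rightarrow> ('n \<Rightarrow> 'n \<Rightarrow> 'n \<Rightarrow> real) \<Rightarrow> real" where
  "S0g gi c = (\<Sum>i\<in>UNIV. \<Sum>k\<in>UNIV. gi i k * S2g gi c i k)"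

lemma S2g_G: "S2g gi c i k = Gt gi c c i k - Gp gi c c i k"
  unfolding S2g_def S4g_def Gt_def Gp_def
  by (simp add: sum_distrib_left right_diff_distrib sum_subtractf mult_ac)

lemma rai_kill_lin:
  fixes y :: "'n::finite \<Rightarrow> real"
  assumes "\<And>s. (\<Sum>a\<in>UNIV. y a * X a s) = 0"
  shows "(\<Sum>a\<in>UNIV. y a * (\<Sum>s\<in>UNIV. gi r s * X a s)) = 0"
proof -
  have "(\<Sum>a\<in>UNIV. y a * (\<Sum>s\<in>UNIV. gi r s * X a s)) = (\<Sum>s\<in>UNIV. \<Sum>a\<in>UNIV. y a * (gi r s * X a s))"
    by (rule swap_in1)
  also have "\<dots> = (\<Sum>s\<in>UNIV. gi r s * (\<Sum>a\<in>UNIV. y a * X a s))"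
    by (simp add: sum_distrib_left mult_ac)
  finally show ?thesis using assms by simp
qed

lemma ykill_all:
  assumes sd: "sym3 d" and kd: "ykill y d"
  shows "(\<Sum>a\<in>UNIV. y a * d a b s) = 0" "(\<Sum>a\<in>UNIV. y a * d b a s) = 0" "(\<Sum>a\<in>UNIV. y a * d b s a) = 0"
  using ykillD[OF sd kd, of b s] ykillD[OF sd kd, of s b]
  by (simp_all add: mult.commute)

lemma pull1: "(\<Sum>a\<in>A. y a * (X * S a)) = X * (\<Sum>a\<in>A. y a * S a)" for X :: real
  by (simp add: sum_distrib_left mult_ac)

lemma pull2: "(\<Sum>a\<in>A. y a * (S a * X)) = X * (\<Sum>a\<in>A. y a * S a)" for X :: real
  by (simp add: sum_distrib_left mult_ac)

lemma S4g_kill: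
  fixes d :: "'n::finite \<Rightarrow> 'n \<Rightarrow> 'n \<Rightarrow> real"
  assumes sd: "sym3 d" and kd: "ykill y d"
  shows "(\<Sum>a\<in>UNIV. y a * S4g gi d a i j k) = 0"
    and "(\<Sum>a\<in>UNIV. y a * S4g gi d h a j k) = 0"
    and "(\<Sum>a\<in>UNIV. y a * S4g gi d h i a k) = 0"
    and "(\<Sum>a\<in>UNIV. y a * S4g gi d h i j a) = 0"
proof -
  note K = ykill_all[OF sd kd]
  have gen: "(\<Sum>a\<in>UNIV. y a * (\<Sum>r\<in>UNIV. A a r * B a r - C a r * D a r)) = 0"
    if "\<And>r. (\<Sum>a\<in>UNIV. y a * (A a r * B a r)) = 0" "\<And>r. (\<Sum>a\<in>UNIV. y a * (C a r * D a r)) = 0"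
    for A B C D :: "'n \<Rightarrow> 'n \<Rightarrow> real"
  proof -
    have "(\<Sum>a\<in>UNIV. y a * (\<Sum>r\<in>UNIV. A a r * B a r - C a r * D a r))
      = (\<Sum>r\<in>UNIV. \<Sum>a\<in>UNIV. y a * (A a r * B a r - C a r * D a r))" by (rule swap_in1)
    also have "\<dots> = (\<Sum>r\<in>UNIV. (\<Sum>a\<in>UNIV. y a * (A a r * B a r)) - (\<Sum>a\<in>UNIV. y a * (C a r * D a r)))"
      by (simp add: right_diff_distrib sum_subtractf)
    finally show ?thesis using that by simp
  qed
  have R: "(\<Sum>a\<in>UNIV. y a * (\<Sum>s\<in>UNIV. gi r s * d a b s)) = 0"
          "(\<Sum>a\<in>UNIV. y a * (\<Sum>s\<in>UNIV. gi r s * d b a s)) = 0" for r b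
    by (rule rai_kill_lin, rule K)+
  show "(\<Sum>a\<in>UNIV. y a * S4g gi d a i j k) = 0" unfolding S4g_def
    by (rule gen) (simp_all only: pull1 R mult_zero_right)
  show "(\<Sum>a\<in>UNIV. y a * S4g gi d h a j k) = 0" unfolding S4g_def
    by (rule gen) (simp_all only: pull2 K mult_zero_right)
  show "(\<Sum>a\<in>UNIV. y a * S4g gi d h i a k) = 0" unfolding S4g_def
    by (rule gen) (simp_all only: pull1 pull2 K R mult_zero_right)
  show "(\<Sum>a\<in>UNIV. y a * S4g gi d h i j a) = 0" unfolding S4g_def
    by (rule gen) (simp_all only: pull1 pull2 K R mult_zero_right)
qed


lemma S2g_kill:
  fixes d :: "'n::finite \<Rightarrow> 'n \<Rightarrow> 'n \<Rightarrow> real"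
  assumes sd: "sym3 d" and kd: "ykill y d"
  shows "(\<Sum>a\<in>UNIV. y a * S2g gi d a k) = 0" "(\<Sum>a\<in>UNIV. y a * S2g gi d i a) = 0"
proof -
  have "(\<Sum>a\<in>UNIV. y a * S2g gi d a k) = (\<Sum>h\<in>UNIV. \<Sum>j\<in>UNIV. \<Sum>a\<in>UNIV. y a * (gi h j * S4g gi d h a j k))"
    unfolding S2g_def by (rule swap_in2) auto
  also have "\<dots> = (\<Sum>h\<in>UNIV. \<Sum>j\<in>UNIV. gi h j * (\<Sum>a\<in>UNIV. y a * S4g gi d h a j k))"
    by (simp add: sum_distrib_left mult_ac)
  finally show "(\<Sum>a\<in>UNIV. y a * S2g gi d a k) = 0" by (simp add: S4g_kill[OF sd kd])
  have "(\<Sum>a\<in>UNIV. y a * S2g gi d i a) = (\<Sum>h\<in>UNIV. \<Sum>j\<in>UNIV. \<Sum>a\<in>UNIV. y a * (gi h j * S4g gi d h i j a))"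
    unfolding S2g_def by (rule swap_in2) auto
  also have "\<dots> = (\<Sum>h\<in>UNIV. \<Sum>j\<in>UNIV. gi h j * (\<Sum>a\<in>UNIV. y a * S4g gi d h i j a))"
    by (simp add: sum_distrib_left mult_ac)
  finally show "(\<Sum>a\<in>UNIV. y a * S2g gi d i a) = 0" by (simp add: S4g_kill[OF sd kd])
qed

locale starctx =
  fixes gs gis gi hh :: "'n::finite \<Rightarrow> 'n \<Rightarrow> real" and y l ls :: "'n \<Rightarrow> real" and p F Fs :: real
  assumes gis_l: "\<And>a b. (\<Sum>k\<in>UNIV. gis a k * gs k b) = (if a = b then 1 else 0)"
  and gs_def: "\<And>a b. gs a b = p * hh a b + ls a * ls b"
  and hg: "\<And>k j. (\<Sum>m\<in>UNIV. hh k m * gi m j) = (if k = j then 1 else 0) - l k * y j / F"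
  and gsy: "\<And>k. (\<Sum>m\<in>UNIV. gs k m * y m) = Fs * ls k"
  and p0: "p \<noteq> 0" and Fs0: "Fs \<noteq> 0"
begin

lemma gi_rep:
  "gi h j = p * gis h j - p * (\<Sum>k\<in>UNIV. gis h k * l k) * y j / F + (y h / Fs) * (\<Sum>m\<in>UNIV. ls m * gi m j)"
proof -
  define G where "G = (\<Sum>m\<in>UNIV. ls m * gi m j)"
  have gsgi: "(\<Sum>m\<in>UNIV. gs k m * gi m j) = p * ((if k = j then 1 else 0) - l k * y j / F) + ls k * G" for k
  proof -
    have "(\<Sum>m\<in>UNIV. gs k m * gi m j) = p * (\<Sum>m\<in>UNIV. hh k m * gi m j) + ls k * G"
      unfolding gs_def G_def by (simp add: algebra_simps sum.distrib sum_distrib_left)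
    then show ?thesis by (simp add: hg)
  qed
  have gisls: "(\<Sum>k\<in>UNIV. gis h k * ls k) = y h / Fs"
  proof -
    have "(\<Sum>k\<in>UNIV. gis h k * ls k) = (\<Sum>k\<in>UNIV. gis h k * (\<Sum>m\<in>UNIV. gs k m * y m)) / Fs"
      using Fs0 by (simp add: gsy sum_divide_distrib)
    also have "(\<Sum>k\<in>UNIV. gis h k * (\<Sum>m\<in>UNIV. gs k m * y m)) = (\<Sum>m\<in>UNIV. \<Sum>k\<in>UNIV. gis h k * (gs k m * y m))"
      by (rule swap_in1)
    also have "\<dots> = (\<Sum>m\<in>UNIV. (\<Sum>k\<in>UNIV. gis h k * gs k m) * y m)"
      by (simp add: sum_distrib_right sum_distrib_left mult_ac)
    also have "\<dots> = (\<Sum>m\<in>UNIV. if h = m then y m else 0)"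
      by (rule sum.cong) (auto simp: gis_l)
    also have "\<dots> = y h" by simp
    finally show ?thesis .
  qed
  have "gi h j = (\<Sum>m\<in>UNIV. if h = m then gi m j else 0)" by simp
  also have "\<dots> = (\<Sum>m\<in>UNIV. (\<Sum>k\<in>UNIV. gis h k * gs k m) * gi m j)"
    by (rule sum.cong) (auto simp: gis_l)
  also have "\<dots> = (\<Sum>m\<in>UNIV. \<Sum>k\<in>UNIV. gis h k * (gs k m * gi m j))"
    by (simp add: sum_distrib_right sum_distrib_left mult_ac)
  also have "\<dots> = (\<Sum>k\<in>UNIV. gis h k * (\<Sum>m\<in>UNIV. gs k m * gi m j))"
    by (subst sum.swap) (simp add: sum_distrib_left)
  also have "\<dots> = (\<Sum>k\<in>UNIV. gis h k * (p * ((if k = j then 1 else 0) - l k * y j / F) + ls k * G))"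
    by (simp add: gsgi)
  also have "\<dots> = (\<Sum>k\<in>UNIV. (if k = j then p * gis h k else 0) - (p * y j / F) * (gis h k * l k) + G * (gis h k * ls k))"
    by (rule sum.cong) (auto simp: algebra_simps)
  also have "\<dots> = p * gis h j - (p * y j / F) * (\<Sum>k\<in>UNIV. gis h k * l k) + G * (\<Sum>k\<in>UNIV. gis h k * ls k)"
    by (simp add: sum.distrib sum_subtractf sum_distrib_left)
  finally show ?thesis unfolding gisls G_def by (simp add: algebra_simps)
qed

lemma BL:
  assumes T1: "\<And>h. (\<Sum>j\<in>UNIV. T h j * y j) = 0" and T2: "\<And>j. (\<Sum>h\<in>UNIV. y h * T h j) = 0"
  shows "(\<Sum>h\<in>UNIV. \<Sum>j\<in>UNIV. gis h j * T h j) = (\<Sum>h\<in>UNIV. \<Sum>j\<in>UNIV. gi h j * T h j) / p"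
proof -
  define z where "z h = (\<Sum>k\<in>UNIV. gis h k * l k)" for h
  define G where "G j = (\<Sum>m\<in>UNIV. ls m * gi m j)" for j
  have "(\<Sum>h\<in>UNIV. \<Sum>j\<in>UNIV. gi h j * T h j)
      = (\<Sum>h\<in>UNIV. \<Sum>j\<in>UNIV. p * (gis h j * T h j) - (p / F * z h) * (T h j * y j) + (G j / Fs) * (y h * T h j))"
    by (intro sum.cong refl) (subst gi_rep, simp add: z_def G_def algebra_simps)
  also have "\<dots> = p * (\<Sum>h\<in>UNIV. \<Sum>j\<in>UNIV. gis h j * T h j)
      - (\<Sum>h\<in>UNIV. (p / F * z h) * (\<Sum>j\<in>UNIV. T h j * y j))
      + (\<Sum>h\<in>UNIV. \<Sum>j\<in>UNIV. (G j / Fs) * (y h * T h j))"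
    by (simp add: sum.distrib sum_subtractf sum_distrib_left)
  also have "(\<Sum>h\<in>UNIV. \<Sum>j\<in>UNIV. (G j / Fs) * (y h * T h j)) = (\<Sum>j\<in>UNIV. (G j / Fs) * (\<Sum>h\<in>UNIV. y h * T h j))"
    by (subst sum.swap) (simp add: sum_distrib_left)
  finally show ?thesis using p0 by (simp add: T1 T2)
qed

lemma BLq:
  assumes A: "(\<Sum>r\<in>UNIV. A r * y r) = 0" and B: "(\<Sum>r\<in>UNIV. B r * y r) = 0"
  shows "(\<Sum>r\<in>UNIV. A r * (\<Sum>s\<in>UNIV. gis r s * B s)) = (\<Sum>r\<in>UNIV. A r * (\<Sum>s\<in>UNIV. gi r s * B s)) / p"
proof -
  have "(\<Sum>r\<in>UNIV. \<Sum>s\<in>UNIV. gis r s * (A r * B s)) = (\<Sum>r\<in>UNIV. \<Sum>s\<in>UNIV. gi r s * (A r * B s)) / p"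
  proof (rule BL)
    show "(\<Sum>s\<in>UNIV. A r * B s * y s) = 0" for r
      using B by (simp add: sum_distrib_left[symmetric] mult.assoc del: sum_distrib_left)
    show "(\<Sum>r\<in>UNIV. y r * (A r * B s)) = 0" for s
    proof -
      have "(\<Sum>r\<in>UNIV. y r * (A r * B s)) = B s * (\<Sum>r\<in>UNIV. A r * y r)"
        by (simp add: sum_distrib_left mult_ac)
      then show ?thesis using A by simp
    qed
  qed
  then show ?thesis by (simp add: sum_distrib_left mult_ac)
qed

lemma star_S:
  fixes cs dd :: "'n \<Rightarrow> 'n \<Rightarrow> 'n \<Rightarrow> real"
  assumes cs: "\<And>a b e. cs a b e = p * dd a b e" and sd: "sym3 dd" and kd: "ykill y dd"
  shows "S2g gis cs i k = S2g gi dd i k" and "S0g gis cs = S0g gi dd / p"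
proof -
  have kc: "(\<Sum>r\<in>UNIV. cs a b r * y r) = 0" for a b
    using ykillD(1)[OF sd kd, of a b] by (simp add: cs mult.assoc sum_distrib_left[symmetric] del: sum_distrib_left)
  have kc2: "(\<Sum>r\<in>UNIV. cs a b r * y r) = 0" for a b by (rule kc)
  have S4: "S4g gis cs h a j b = p * S4g gi dd h a j b" for h a j b
  proof -
    have "S4g gis cs h a j b = (\<Sum>r\<in>UNIV. cs a j r * (\<Sum>s\<in>UNIV. gis r s * cs h b s))
        - (\<Sum>r\<in>UNIV. cs a b r * (\<Sum>s\<in>UNIV. gis r s * cs h j s))"
      unfolding S4g_def by (simp add: sum_subtractf)
    also have "\<dots> = (\<Sum>r\<in>UNIV. cs a j r * (\<Sum>s\<in>UNIV. gi r s * cs h b s)) / p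
        - (\<Sum>r\<in>UNIV. cs a b r * (\<Sum>s\<in>UNIV. gi r s * cs h j s)) / p"
      by (simp add: BLq kc)
    also have "\<dots> = p * S4g gi dd h a j b"
    proof -
      have pp: "(\<Sum>r\<in>UNIV. cs a' b' r * (\<Sum>s\<in>UNIV. gi r s * cs h' j' s))
          = p * p * (\<Sum>r\<in>UNIV. dd a' b' r * (\<Sum>s\<in>UNIV. gi r s * dd h' j' s))" for a' b' h' j'
        unfolding cs by (simp add: sum_distrib_left mult_ac)
      have S4e: "S4g gi dd h a j b = (\<Sum>r\<in>UNIV. dd a j r * (\<Sum>s\<in>UNIV. gi r s * dd h b s))
        - (\<Sum>r\<in>UNIV. dd a b r * (\<Sum>s\<in>UNIV. gi r s * dd h j s))"
        unfolding S4g_def by (simp add: sum_subtractf)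
      show ?thesis unfolding pp S4e using p0 by (simp add: field_simps)
    qed
    finally show ?thesis .
  qed
  show S2: "S2g gis cs i k = S2g gi dd i k" for i k
  proof -
    have "S2g gis cs i k = (\<Sum>h\<in>UNIV. \<Sum>j\<in>UNIV. gis h j * (p * S4g gi dd h i j k))"
      unfolding S2g_def S4 ..
    also have "\<dots> = (\<Sum>h\<in>UNIV. \<Sum>j\<in>UNIV. gi h j * (p * S4g gi dd h i j k)) / p"
    proof (rule BL)
      show "(\<Sum>j\<in>UNIV. p * S4g gi dd h i j k * y j) = 0" for h
        using S4g_kill(3)[OF sd kd, of gi h i k]
        by (simp add: sum_distrib_left[symmetric] mult_ac del: sum_distrib_left)
      show "(\<Sum>h\<in>UNIV. y h * (p * S4g gi dd h i j k)) = 0" for j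
        using S4g_kill(1)[OF sd kd, of gi i j k]
        by (simp add: sum_distrib_left[symmetric] mult_ac del: sum_distrib_left)
    qed
    also have "\<dots> = S2g gi dd i k"
      unfolding S2g_def using p0 by (simp add: sum_distrib_left[symmetric] mult_ac del: sum_distrib_left)
    finally show ?thesis .
  qed
  show "S0g gis cs = S0g gi dd / p"
    unfolding S0g_def S2
  proof (rule BL)
    show "(\<Sum>j\<in>UNIV. S2g gi dd h j * y j) = 0" for h
      using S2g_kill(2)[OF sd kd, of gi h] by (simp add: mult_ac)
    show "(\<Sum>h\<in>UNIV. y h * S2g gi dd h j) = 0" for j
      using S2g_kill(1)[OF sd kd, of gi j] by simp
  qed
qed

end




lemma inv_both:
  fixes A :: "real^'n::finite^'n"
  assumes "invertible A"
  shows "A ** matrix_inv A = mat 1" "matrix_inv A ** A = mat 1"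
  using someI_ex[OF assms[unfolded invertible_def]] unfolding matrix_inv_def by auto

lemma inv_sym:
  fixes A :: "real^'n::finite^'n"
  assumes "invertible A" "transpose A = A"
  shows "transpose (matrix_inv A) = matrix_inv A"
proof -
  note I = inv_both[OF assms(1)]
  have "transpose (matrix_inv A) ** A = mat 1"
    by (metis I(1) assms(2) matrix_transpose_mul transpose_mat)
  then have "transpose (matrix_inv A) = transpose (matrix_inv A) ** (A ** matrix_inv A)" by (simp add: I)
  also have "\<dots> = matrix_inv A" by (simp add: matrix_mul_assoc \<open>transpose (matrix_inv A) ** A = mat 1\<close>)
  finally show ?thesis .
qed

lemma posdef_invertible:
  fixes A :: "real^'n::finite^'n"
  assumes "\<forall>v::real^'n. v \<noteq> 0 \<longrightarrow> (\<Sum>i\<in>UNIV. \<Sum>j\<in>UNIV. A $ i $ j * v $ i * v $ j) > 0"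
  shows "invertible A"
proof -
  have "\<forall>x. A *v x = 0 \<longrightarrow> x = 0"
  proof (intro allI impI)
    fix x assume Ax: "A *v x = 0"
    have "(\<Sum>i\<in>UNIV. \<Sum>j\<in>UNIV. A $ i $ j * x $ i * x $ j) = (\<Sum>i\<in>UNIV. x $ i * (A *v x) $ i)"
      by (simp add: matrix_vector_mult_def sum_distrib_left mult_ac)
    also have "\<dots> = 0" by (simp add: Ax)
    finally show "x = 0" using assms by force
  qed
  then show ?thesis
    using invertible_left_inverse matrix_left_invertible_ker by blast
qed

lemma inv_entries:
  fixes F :: "real^'n::finite \<Rightarrow> real"
  assumes "invertible (gmat F y)"
  shows "(\<Sum>k\<in>UNIV. ginv F a k y * fund F k b y) = (if a = b then 1 else 0)"
    and "(\<Sum>k\<in>UNIV. fund F a k y * ginv F k b y) = (if a = b then 1 else 0)"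
proof -
  note I = inv_both[OF assms]
  have "(matrix_inv (gmat F y) ** gmat F y) $ a $ b = mat 1 $ a $ b" using I(2) by simp
  then show "(\<Sum>k\<in>UNIV. ginv F a k y * fund F k b y) = (if a = b then 1 else 0)"
    by (simp add: matrix_matrix_mult_def mat_def ginv_def gmat_def)
  have "(gmat F y ** matrix_inv (gmat F y)) $ a $ b = mat 1 $ a $ b" using I(1) by simp
  then show "(\<Sum>k\<in>UNIV. fund F a k y * ginv F k b y) = (if a = b then 1 else 0)"
    by (simp add: matrix_matrix_mult_def mat_def ginv_def gmat_def)
qed

lemma ginv_sym:
  fixes F :: "real^'n::finite \<Rightarrow> real"
  assumes "invertible (gmat F y)" "\<And>a b. fund F a b y = fund F b a y"
  shows "ginv F a b y = ginv F b a y"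
proof -
  have "transpose (gmat F y) = gmat F y"
    using assms(2) by (simp add: transpose_def gmat_def vec_eq_iff)
  from inv_sym[OF assms(1) this] have "transpose (matrix_inv (gmat F y)) $ b $ a = matrix_inv (gmat F y) $ b $ a"
    by simp
  then show ?thesis by (simp add: transpose_def ginv_def)
qed


lemma cdist: "(c::real) * (X - d * Y) = c * X - (c * d) * Y" by (simp add: algebra_simps)

lemma final_arith:
  fixes N S2 S0 cm CM m2 h mi mj Fs p \<kappa> :: real
  assumes "N - 3 \<noteq> 0" "N - 2 \<noteq> 0" "Fs \<noteq> 0" "p \<noteq> 0" "\<kappa> = 1 / (2 * Fs)"
  shows "1 / (N - 3) * ((S2 + \<kappa> * ((3 - N) * cm - h * CM) + \<kappa>^2 * ((1 - N) * m2 * h + (3 - N) * mi * mj))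
          - (S0 + \<kappa> * ((3 - N) - (N - 1)) * CM + \<kappa>^2 * ((1 - N) * (N - 1) + (3 - N)) * m2) / p * (p * h)
            / (2 * (N - 2)))
       = 1 / (N - 3) * (S2 - S0 * h / (2 * (N - 2))) - (cm + mi * mj / (2 * Fs) + h * m2 / (4 * Fs)) / (2 * Fs)"
proof -
  have N2: "N \<noteq> 2" using assms(2) by auto
  have e: "(S0 + \<kappa> * ((3 - N) - (N - 1)) * CM + \<kappa>^2 * ((1 - N) * (N - 1) + (3 - N)) * m2) / p * (p * h)
     = (S0 + \<kappa> * ((3 - N) - (N - 1)) * CM + \<kappa>^2 * ((1 - N) * (N - 1) + (3 - N)) * m2) * h"
    using assms(4) by simp
  have d1: "(S0 + \<kappa> * ((3 - N) - (N - 1)) * CM + \<kappa>^2 * ((1 - N) * (N - 1) + (3 - N)) * m2) * h / (2 * (N - 2))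
      = S0 * h / (2 * (N - 2)) - \<kappa> * CM * h - \<kappa>^2 * (N + 1) / 2 * m2 * h"
    using N2 by (simp add: field_simps)
  have inner: "(S2 + \<kappa> * ((3 - N) * cm - h * CM) + \<kappa>^2 * ((1 - N) * m2 * h + (3 - N) * mi * mj))
          - (S0 + \<kappa> * ((3 - N) - (N - 1)) * CM + \<kappa>^2 * ((1 - N) * (N - 1) + (3 - N)) * m2) / p * (p * h)
            / (2 * (N - 2))
     = (S2 - S0 * h / (2 * (N - 2))) - (N - 3) * (\<kappa> * cm + \<kappa>^2 * (mi * mj + m2 * h / 2))"
    unfolding e d1 by (simp add: field_simps)
  have c: "1 / (N - 3) * (N - 3) = 1" using assms(1) by simp
  have Y: "\<kappa> * cm + \<kappa>^2 * (mi * mj + m2 * h / 2) = (cm + mi * mj / (2 * Fs) + h * m2 / (4 * Fs)) / (2 * Fs)"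
    unfolding assms(5) using assms(3) by (simp add: field_simps power2_eq_square)
  have "1 / (N - 3) * ((S2 - S0 * h / (2 * (N - 2))) - (N - 3) * (\<kappa> * cm + \<kappa>^2 * (mi * mj + m2 * h / 2)))
     = 1 / (N - 3) * (S2 - S0 * h / (2 * (N - 2))) - (1 / (N - 3) * (N - 3)) * (\<kappa> * cm + \<kappa>^2 * (mi * mj + m2 * h / 2))"
    by (rule cdist)
  also have "\<dots> = 1 / (N - 3) * (S2 - S0 * h / (2 * (N - 2))) - (cm + mi * mj / (2 * Fs) + h * m2 / (4 * Fs)) / (2 * Fs)"
    unfolding c Y by simp
  finally show ?thesis unfolding inner .
qed

lemma main_alg:
  fixes F Fs :: "real^'n::finite \<Rightarrow> real" and y bv :: "real^'n" and a :: real
    and Q :: "'n \<Rightarrow> 'n \<Rightarrow> real" and R :: "'n \<Rightarrow> 'n \<Rightarrow> 'n \<Rightarrow> real"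
  assumes n: "CARD('n) > 3" and F0: "F y > 0" and Fs0: "Fs y > 0" and a0: "a > 0"
    and Fsy: "Fs y = a * F y + betaf bv y"
    and lsd: "\<And>i. lcov Fs i y = a * lcov F i y + bv $ i"
    and fF: "\<And>i j. fund F i j y = lcov F i y * lcov F j y + F y * Q i j"
    and cF: "\<And>i j k. cten F i j k y = (Q k i * lcov F j y + lcov F i y * Q k j + lcov F k y * Q i j + F y * R i j k) / 2"
    and fFs: "\<And>i j. fund Fs i j y = lcov Fs i y * lcov Fs j y + Fs y * a * Q i j"
    and cFs: "\<And>i j k. cten Fs i j k y = (a * Q k i * lcov Fs j y + lcov Fs i y * (a * Q k j)
                 + lcov Fs k y * (a * Q i j) + Fs y * (a * R i j k)) / 2"
    and Qs: "\<And>i j. Q i j = Q j i" and Rs: "sym3 R"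
    and E1: "(\<Sum>i\<in>UNIV. lcov F i y * y $ i) = F y"
    and E2: "\<And>j. (\<Sum>i\<in>UNIV. Q i j * y $ i) = 0"
    and E3: "\<And>i j. (\<Sum>k\<in>UNIV. R i j k * y $ k) = - Q i j"
    and invF: "invertible (gmat F y)" and invFs: "invertible (gmat Fs y)"
  shows "Mten Fs i j y = Mten F i j y - Hten F Fs bv i j y / (2 * Fs y)"
proof -
  define l where "l k = lcov F k y" for k
  define ls where "ls k = lcov Fs k y" for k
  define gi where "gi r s = ginv F r s y" for r s
  define gis where "gis r s = ginv Fs r s y" for r s
  define hh where "hh r s = F y * Q r s" for r s
  define yv where "yv k = y $ k" for k
  define \<beta> where "\<beta> = betaf bv y"
  define m where "m k = mcov F bv k y" for k
  define p where "p = a * Fs y / F y"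
  define \<kappa> where "\<kappa> = 1 / (2 * Fs y)"
  define c where "c r s t = cten F r s t y" for r s t
  define cs where "cs r s t = cten Fs r s t y" for r s t
  define dd where "dd = (\<lambda>r s t. c r s t + \<kappa> * mu0 hh m r s t)"
  have mdef: "m k = bv $ k - \<beta> / F y * l k" for k
    unfolding m_def mcov_def \<beta>_def l_def lcov_def ..
  have Qy: "(\<Sum>j\<in>UNIV. Q i j * yv j) = 0" for i
    using E2[of i] by (simp add: Qs[of i] yv_def)
  have gsym: "fund F a b y = fund F b a y" for a b by (simp add: fF Qs[of a b] mult.commute)
  have gssym: "fund Fs a b y = fund Fs b a y" for a b by (simp add: fFs Qs[of a b] mult.commute)
  have gi_sym: "gi a b = gi b a" for a b unfolding gi_def by (rule ginv_sym[OF invF gsym])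
  have giF: "(\<Sum>k\<in>UNIV. gi a k * fund F k b y) = (if a = b then 1 else 0)" for a b
    unfolding gi_def by (rule inv_entries(1)[OF invF])
  have gy: "(\<Sum>j\<in>UNIV. fund F i j y * yv j) = F y * l i" for i
  proof -
    have "(\<Sum>j\<in>UNIV. fund F i j y * yv j) = l i * (\<Sum>j\<in>UNIV. l j * yv j) + F y * (\<Sum>j\<in>UNIV. Q i j * yv j)"
      by (simp add: fF l_def algebra_simps sum.distrib sum_distrib_left)
    then show ?thesis using E1 Qy by (simp add: l_def yv_def)
  qed
  have gil: "(\<Sum>j\<in>UNIV. gi i j * l j) = yv i / F y" for i
  proof -
    have "(\<Sum>j\<in>UNIV. gi i j * (F y * l j)) = (\<Sum>j\<in>UNIV. gi i j * (\<Sum>k\<in>UNIV. fund F j k y * yv k))"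
      by (simp add: gy)
    also have "\<dots> = (\<Sum>k\<in>UNIV. \<Sum>j\<in>UNIV. gi i j * (fund F j k y * yv k))" by (rule swap_in1)
    also have "\<dots> = (\<Sum>k\<in>UNIV. (\<Sum>j\<in>UNIV. gi i j * fund F j k y) * yv k)"
      by (simp add: sum_distrib_right sum_distrib_left mult_ac)
    also have "\<dots> = (\<Sum>k\<in>UNIV. if i = k then yv k else 0)"
      by (rule sum.cong) (auto simp: giF)
    also have "\<dots> = yv i" by simp
    finally have "F y * (\<Sum>j\<in>UNIV. gi i j * l j) = yv i"
      by (simp add: sum_distrib_left mult_ac)
    then show ?thesis using F0 by (simp add: field_simps)
  qed
  have hu: "(\<Sum>j\<in>UNIV. gi r j * hh j s) = (if r = s then 1 else 0) - yv r * (l s / F y)" for r s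
  proof -
    have "(\<Sum>j\<in>UNIV. gi r j * hh j s) = (\<Sum>j\<in>UNIV. gi r j * fund F j s y - (gi r j * l j) * l s)"
      by (intro sum.cong refl) (simp add: hh_def fF l_def algebra_simps)
    also have "\<dots> = (\<Sum>j\<in>UNIV. gi r j * fund F j s y) - (\<Sum>j\<in>UNIV. gi r j * l j) * l s"
      by (simp add: sum_subtractf sum_distrib_right)
    finally have "(\<Sum>j\<in>UNIV. gi r j * hh j s) = (\<Sum>j\<in>UNIV. gi r j * fund F j s y) - (\<Sum>j\<in>UNIV. gi r j * l j) * l s" .
    then show ?thesis by (simp add: gil giF)
  qed
  have hsym: "hh r s = hh s r" for r s by (simp add: hh_def Qs[of r s])
  have hy: "(\<Sum>s\<in>UNIV. hh r s * yv s) = 0" for r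
    using Qy[of r] by (simp add: hh_def sum_distrib_left[symmetric] mult.assoc del: sum_distrib_left)
  have ly: "(\<Sum>s\<in>UNIV. l s * yv s) = F y" using E1 by (simp add: l_def yv_def)
  have by_: "(\<Sum>s\<in>UNIV. bv $ s * yv s) = \<beta>" by (simp add: \<beta>_def betaf_def yv_def)
  have my: "(\<Sum>s\<in>UNIV. m s * yv s) = 0"
  proof -
    have "(\<Sum>s\<in>UNIV. m s * yv s) = (\<Sum>s\<in>UNIV. bv $ s * yv s) - \<beta> / F y * (\<Sum>s\<in>UNIV. l s * yv s)"
      by (simp add: mdef algebra_simps sum_subtractf sum_distrib_left)
    then show ?thesis using F0 by (simp add: ly by_)
  qed
  have yw: "(\<Sum>s\<in>UNIV. yv s * (l s / F y)) = 1"
    using ly F0 by (simp add: sum_divide_distrib[symmetric] mult.commute)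
  interpret C: ctx gi hh yv "\<lambda>s. l s / F y" m
    by unfold_locales (use gi_sym hsym hu hy my yw in auto)
  have sc: "sym3 c" unfolding sym3_def c_def cF using Rs unfolding sym3_def
    by (auto simp: Qs algebra_simps)
  have kc: "ykill yv c"
  proof -
    have "(\<Sum>r\<in>UNIV. c a b r * yv r) = 0" for a b
    proof -
      have "(\<Sum>r\<in>UNIV. c a b r * yv r) = (\<Sum>r\<in>UNIV. (l b / 2) * (Q r a * yv r) + (l a / 2) * (Q r b * yv r)
          + (Q a b / 2) * (l r * yv r) + (F y / 2) * (R a b r * yv r))"
        by (intro sum.cong refl) (simp add: c_def cF l_def field_simps)
      also have "\<dots> = (l b / 2) * (\<Sum>r\<in>UNIV. Q r a * yv r) + (l a / 2) * (\<Sum>r\<in>UNIV. Q r b * yv r)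
          + (Q a b / 2) * (\<Sum>r\<in>UNIV. l r * yv r) + (F y / 2) * (\<Sum>r\<in>UNIV. R a b r * yv r)"
        by (simp only: sum.distrib sum_distrib_left[symmetric])
      finally show ?thesis using E2 E3 ly by (simp add: yv_def)
    qed
    then show ?thesis unfolding ykill_def by blast
  qed
  have Fne: "F y \<noteq> 0" and Fsne: "Fs y \<noteq> 0" using F0 Fs0 by auto
  have p0: "p \<noteq> 0" using a0 F0 Fs0 by (simp add: p_def)
  have lsy: "(\<Sum>s\<in>UNIV. ls s * yv s) = Fs y"
  proof -
    have "(\<Sum>s\<in>UNIV. ls s * yv s) = a * (\<Sum>s\<in>UNIV. l s * yv s) + (\<Sum>s\<in>UNIV. bv $ s * yv s)"
      by (simp add: ls_def lsd l_def algebra_simps sum.distrib sum_distrib_left)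
    then show ?thesis by (simp add: ly by_ Fsy \<beta>_def)
  qed
  interpret S: starctx "\<lambda>r s. fund Fs r s y" gis gi hh yv l ls p "F y" "Fs y"
  proof
    show "(\<Sum>k\<in>UNIV. gis a k * fund Fs k b y) = (if a = b then 1 else 0)" for a b
      unfolding gis_def by (rule inv_entries(1)[OF invFs])
    show "fund Fs a b y = p * hh a b + ls a * ls b" for a b
      using Fne by (simp add: fFs ls_def p_def hh_def)
    show "(\<Sum>m\<in>UNIV. hh k m * gi m j) = (if k = j then 1 else 0) - l k * yv j / F y" for k j
    proof -
      have "(\<Sum>m\<in>UNIV. hh k m * gi m j) = (\<Sum>m\<in>UNIV. fund F k m y * gi m j - l k * (gi j m * l m))"
        by (intro sum.cong refl) (simp add: hh_def fF l_def algebra_simps gi_sym[of j])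
      also have "\<dots> = (\<Sum>m\<in>UNIV. fund F k m y * gi m j) - l k * (\<Sum>m\<in>UNIV. gi j m * l m)"
        by (simp add: sum_subtractf sum_distrib_left)
      also have "(\<Sum>m\<in>UNIV. fund F k m y * gi m j) = (if k = j then 1 else 0)"
        unfolding gi_def by (rule inv_entries(2)[OF invF])
      finally show ?thesis by (simp add: gil)
    qed
    show "(\<Sum>m\<in>UNIV. fund Fs k m y * yv m) = Fs y * ls k" for k
    proof -
      have "(\<Sum>m\<in>UNIV. fund Fs k m y * yv m) = ls k * (\<Sum>m\<in>UNIV. ls m * yv m) + Fs y * a * (\<Sum>m\<in>UNIV. Q k m * yv m)"
        by (simp add: fFs ls_def algebra_simps sum.distrib sum_distrib_left)
      then show ?thesis by (simp add: lsy Qy)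
    qed
  qed (use p0 Fsne in auto)
  have lsm: "ls k = Fs y / F y * l k + m k" for k
    using Fne by (simp add: ls_def lsd mdef Fsy \<beta>_def l_def field_simps)
  have cs_eq: "cs r s t = p * dd r s t" for r s t
  proof -
    have "cs r s t = (a * Q t r * ls s + ls r * (a * Q t s) + ls t * (a * Q r s) + Fs y * (a * R r s t)) / 2"
      unfolding cs_def cFs ls_def ..
    also have "\<dots> = p * dd r s t"
      unfolding lsm dd_def c_def cF mu0_def hh_def p_def \<kappa>_def
      using Fne Fsne by (simp add: l_def Qs[of t] field_simps)
    finally show ?thesis .
  qed
  have sdd: "sym3 dd" using sc C.mu0_sym unfolding sym3_def dd_def by metis
  have kdd: "ykill yv dd"
  proof -
    have "(\<Sum>r\<in>UNIV. dd a b r * yv r) = (\<Sum>r\<in>UNIV. c a b r * yv r) + \<kappa> * (\<Sum>r\<in>UNIV. mu0 hh m a b r * yv r)" for a b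
      unfolding dd_def by (simp add: algebra_simps sum.distrib sum_distrib_left)
    then show ?thesis using kc C.mu0_kill unfolding ykill_def by simp
  qed
  let ?n = "real CARD('n)"
  let ?CM = "(\<Sum>r\<in>UNIV. trc gi c r * rai gi m r)"
  let ?m2 = "(\<Sum>r\<in>UNIV. m r * rai gi m r)"
  have S2c: "S2 F a b y = S2g gi c a b" for a b
    unfolding S2_def S4_def cmix_def S2g_def S4g_def gi_def c_def ..
  have S0c: "S0 F y = S0g gi c"
    unfolding S0_def S0g_def S2c by (simp add: gi_def)
  have S2s: "S2 Fs a b y = S2g gis cs a b" for a b
    unfolding S2_def S4_def cmix_def S2g_def S4g_def gis_def cs_def ..
  have S0s: "S0 Fs y = S0g gis cs"
    unfolding S0_def S0g_def S2s by (simp add: gis_def)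
  have S2dd: "S2g gi dd a b = S2g gi c a b
       + \<kappa> * ((3 - ?n) * cmv gi c m a b - hh a b * ?CM)
       + \<kappa>^2 * ((1 - ?n) * ?m2 * hh a b + (3 - ?n) * m a * m b)" for a b
    unfolding S2g_G dd_def using C.S2_expand[OF sc kc, of \<kappa> a b] by simp
  have S0dd: "S0g gi dd = S0g gi c + \<kappa> * ((3 - ?n) - (?n - 1)) * ?CM
       + \<kappa>^2 * ((1 - ?n) * (?n - 1) + (3 - ?n)) * ?m2"
    unfolding S0g_def S2dd by (rule C.trace_expand)
  have S2F: "S2 Fs i j y = S2g gi c i j + \<kappa> * ((3 - ?n) * cmv gi c m i j - hh i j * ?CM)
       + \<kappa>^2 * ((1 - ?n) * ?m2 * hh i j + (3 - ?n) * m i * m j)"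
    using S.star_S(1)[OF cs_eq sdd kdd] by (simp add: S2s S2dd)
  have S0F: "S0 Fs y = (S0g gi c + \<kappa> * ((3 - ?n) - (?n - 1)) * ?CM
       + \<kappa>^2 * ((1 - ?n) * (?n - 1) + (3 - ?n)) * ?m2) / p"
    using S.star_S(2)[OF cs_eq sdd kdd] by (simp add: S0s S0dd)
  have hangF: "hang F i j y = hh i j" by (simp add: hang_def fF hh_def lcov_def)
  have hangFs: "hang Fs i j y = p * hh i j"
    using Fne by (simp add: hang_def fFs hh_def lcov_def p_def)
  have cmvH: "(\<Sum>r\<in>UNIV. cmix F i r j y * mcov F bv r y) = cmv gi c m i j"
  proof -
    have "(\<Sum>r\<in>UNIV. cmix F i r j y * mcov F bv r y) = (\<Sum>r\<in>UNIV. \<Sum>k\<in>UNIV. m r * (gi r k * c i j k))"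
      unfolding cmix_def m_def gi_def c_def by (simp add: sum_distrib_left mult_ac)
    also have "\<dots> = (\<Sum>k\<in>UNIV. \<Sum>r\<in>UNIV. m r * (gi r k * c i j k))" by (rule sum.swap)
    also have "\<dots> = cmv gi c m i j"
      unfolding cmv_def rai_def by (simp only: sum_distrib_left sum_distrib_right) (intro sum.cong refl, subst gi_sym, simp add: mult_ac)
    finally show ?thesis .
  qed
  have msqH: "msq F bv y = ?m2"
    unfolding msq_def mcon_def rai_def m_def gi_def ..
  have HtenE: "Hten F Fs bv i j y = cmv gi c m i j + m i * m j / (2 * Fs y) + hh i j * ?m2 / (4 * Fs y)"
    unfolding Hten_def cmvH msqH by (simp add: m_def hangF)
  have n3: "?n - 3 \<noteq> 0" and n2: "?n - 2 \<noteq> 0" using n by auto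
  show ?thesis
    unfolding Mten_def S2F S0F hangFs hangF HtenE S2c S0c
    by (rule final_arith[OF n3 n2 Fsne p0 \<kappa>_def])
qed



lemma line_deriv:
  fixes G :: "'a::real_normed_vector \<Rightarrow> real"
  assumes "(G has_derivative G') (at (p + s *\<^sub>R v))"
  shows "((\<lambda>t. G (p + t *\<^sub>R v)) has_real_derivative G' v) (at s)"
proof -
  have lin: "linear G'" using assms has_derivative_linear by blast
  have h1: "((\<lambda>t. p + t *\<^sub>R v) has_derivative (\<lambda>t. t *\<^sub>R v)) (at s)"
    by (auto intro!: derivative_eq_intros)
  have "((\<lambda>t. G (p + t *\<^sub>R v)) has_derivative (\<lambda>t. G' (t *\<^sub>R v))) (at s)"
    using has_derivative_compose[OF h1, of G G'] assms by simp
  moreover have "(\<lambda>t. G' (t *\<^sub>R v)) = (\<lambda>t. G' v * t)"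
    using linear_scale[OF lin] by (auto simp: mult.commute)
  ultimately show ?thesis by (simp add: has_field_derivative_def)
qed

lemma dirD_has:
  fixes G :: "'a::real_normed_vector \<Rightarrow> real"
  assumes "(G has_derivative G') (at z)"
  shows "dirD G v z = G' v"
proof -
  have "((\<lambda>t. G (z + t *\<^sub>R v)) has_real_derivative G' v) (at 0)"
    by (rule line_deriv) (use assms in simp)
  then show ?thesis unfolding dirD_def by (rule DERIV_imp_deriv)
qed

lemma dirD_cong:
  fixes f g :: "'a::real_normed_vector \<Rightarrow> real"
  assumes "open S" "z \<in> S" "\<And>w. w \<in> S \<Longrightarrow> f w = g w"
  shows "dirD f v z = dirD g v z"
proof -
  have op: "open ((\<lambda>t::real. z + t *\<^sub>R v) -` S)"
    by (rule continuous_open_vimage[OF assms(1)]) (intro continuous_intros)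
  have "eventually (\<lambda>t. (z + t *\<^sub>R v) \<in> S) (nhds (0::real))"
    using op assms(2) by (intro eventually_nhds_in_open[of "(\<lambda>t::real. z + t *\<^sub>R v) -` S", simplified]) auto
  then have "eventually (\<lambda>t. f (z + t *\<^sub>R v) = g (z + t *\<^sub>R v)) (nhds (0::real))"
    by eventually_elim (use assms(3) in auto)
  then show ?thesis unfolding dirD_def by (rule deriv_cong_ev) simp
qed

lemma dirD_mul:
  fixes f g :: "'a::real_normed_vector \<Rightarrow> real"
  assumes "f differentiable (at z)" "g differentiable (at z)"
  shows "dirD (\<lambda>w. f w * g w) v z = dirD f v z * g z + f z * dirD g v z"
proof -
  obtain f' g' where f': "(f has_derivative f') (at z)" and g': "(g has_derivative g') (at z)"
    using assms unfolding differentiable_def by blast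
  have "((\<lambda>w. f w * g w) has_derivative (\<lambda>h. f z * g' h + f' h * g z)) (at z)"
    by (rule has_derivative_mult[OF f' g'])
  then show ?thesis using dirD_has[OF f'] dirD_has[OF g'] by (simp add: dirD_has)
qed

lemma dirD_add:
  fixes f g :: "'a::real_normed_vector \<Rightarrow> real"
  assumes "f differentiable (at z)" "g differentiable (at z)"
  shows "dirD (\<lambda>w. f w + g w) v z = dirD f v z + dirD g v z"
proof -
  obtain f' g' where f': "(f has_derivative f') (at z)" and g': "(g has_derivative g') (at z)"
    using assms unfolding differentiable_def by blast
  have "((\<lambda>w. f w + g w) has_derivative (\<lambda>h. f' h + g' h)) (at z)"
    by (rule has_derivative_add[OF f' g'])
  then show ?thesis using dirD_has[OF f'] dirD_has[OF g'] by (simp add: dirD_has)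
qed

lemma dirD_aff:
  fixes f :: "'a::real_normed_vector \<Rightarrow> real"
  assumes "f differentiable (at z)"
  shows "dirD (\<lambda>w. a * f w + c) v z = a * dirD f v z"
proof -
  obtain f' where f': "(f has_derivative f') (at z)"
    using assms unfolding differentiable_def by blast
  have "((\<lambda>w. a * f w + c) has_derivative (\<lambda>h. a * f' h)) (at z)"
    by (auto intro!: derivative_eq_intros f')
  then show ?thesis using dirD_has[OF f'] by (simp add: dirD_has)
qed

lemma dirD_conf:
  fixes f :: "real^'n::finite \<Rightarrow> real"
  assumes "f differentiable (at z)"
  shows "dirD (\<lambda>w. a * f w + betaf bv w) (axis i 1) z = a * dirD f (axis i 1) z + bv $ i"
proof -
  obtain f' where f': "(f has_derivative f') (at z)"
    using assms unfolding differentiable_def by blast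
  have bf: "betaf bv = (\<lambda>w. inner bv w)"
    by (auto simp: betaf_def inner_vec_def)
  have "((\<lambda>w. a * f w + betaf bv w) has_derivative (\<lambda>h. a * f' h + inner bv h)) (at z)"
    unfolding bf by (auto intro!: derivative_eq_intros f')
  then show ?thesis using dirD_has[OF f'] by (simp add: dirD_has inner_axis)
qed


lemma line_deriv2:
  fixes f :: "'a::real_normed_vector \<Rightarrow> real"
  assumes "f differentiable (at (p + s *\<^sub>R u))"
  shows "((\<lambda>t. f (p + t *\<^sub>R u)) has_real_derivative dirD f u (p + s *\<^sub>R u)) (at s)"
proof -
  obtain f' where f': "(f has_derivative f') (at (p + s *\<^sub>R u))"
    using assms unfolding differentiable_def by blast
  show ?thesis using line_deriv[OF f'] dirD_has[OF f'] by simp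
qed

lemma deriv_est:
  fixes A :: "'a::real_normed_vector \<Rightarrow> real"
  assumes lin: "linear A'" and d1: "\<forall>w. norm (w - z) < d1 \<longrightarrow> \<bar>A w - A z - A' (w - z)\<bar> \<le> e * norm (w - z)"
    and e: "e > 0" and t: "t > 0" and xi: "0 \<le> \<xi>" "\<xi> \<le> t"
    and small: "t * (norm u + norm v) < d1"
  shows "\<bar>(A (z + t *\<^sub>R v + \<xi> *\<^sub>R u) - A (z + \<xi> *\<^sub>R u)) - t * A' v\<bar> \<le> e * t * (2 * norm u + norm v)"
proof -
  have n1: "norm (t *\<^sub>R v + \<xi> *\<^sub>R u) \<le> t * norm v + t * norm u"
  proof -
    have "norm (t *\<^sub>R v + \<xi> *\<^sub>R u) \<le> norm (t *\<^sub>R v) + norm (\<xi> *\<^sub>R u)" by (rule norm_triangle_ineq)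
    also have "\<dots> = t * norm v + \<xi> * norm u" using t xi by simp
    also have "\<dots> \<le> t * norm v + t * norm u" using xi by (simp add: mult_right_mono)
    finally show ?thesis .
  qed
  have n2: "norm (\<xi> *\<^sub>R u) \<le> t * norm u" using xi by (simp add: mult_right_mono)
  have e1: "\<bar>A (z + t *\<^sub>R v + \<xi> *\<^sub>R u) - A z - A' (t *\<^sub>R v + \<xi> *\<^sub>R u)\<bar> \<le> e * norm (t *\<^sub>R v + \<xi> *\<^sub>R u)"
    using d1[rule_format, of "z + t *\<^sub>R v + \<xi> *\<^sub>R u"] n1 small
    by (simp add: add.assoc algebra_simps)
  have e2: "\<bar>A (z + \<xi> *\<^sub>R u) - A z - A' (\<xi> *\<^sub>R u)\<bar> \<le> e * norm (\<xi> *\<^sub>R u)"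
    using d1[rule_format, of "z + \<xi> *\<^sub>R u"] n2 small t
    by (smt (verit, best) add_diff_cancel_left' mult_left_mono norm_ge_zero)
  have lineq: "A' (t *\<^sub>R v + \<xi> *\<^sub>R u) - A' (\<xi> *\<^sub>R u) = t * A' v"
    using linear_add[OF lin] linear_scale[OF lin] by simp
  have "\<bar>(A (z + t *\<^sub>R v + \<xi> *\<^sub>R u) - A (z + \<xi> *\<^sub>R u)) - t * A' v\<bar>
     \<le> \<bar>A (z + t *\<^sub>R v + \<xi> *\<^sub>R u) - A z - A' (t *\<^sub>R v + \<xi> *\<^sub>R u)\<bar> + \<bar>A (z + \<xi> *\<^sub>R u) - A z - A' (\<xi> *\<^sub>R u)\<bar>"
    using lineq by linarith
  also have "\<dots> \<le> e * norm (t *\<^sub>R v + \<xi> *\<^sub>R u) + e * norm (\<xi> *\<^sub>R u)" using e1 e2 by linarith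
  also have "\<dots> \<le> e * (t * norm v + t * norm u) + e * (t * norm u)"
    using n1 n2 e by (intro add_mono mult_left_mono) auto
  also have "\<dots> = e * t * (2 * norm u + norm v)" by (simp add: algebra_simps)
  finally show ?thesis .
qed


lemma schwarz:
  fixes f :: "'a::real_normed_vector \<Rightarrow> real"
  assumes S: "open S" "z \<in> S" and fd: "\<And>w. w \<in> S \<Longrightarrow> f differentiable (at w)"
    and du: "dirD f u differentiable (at z)" and dv: "dirD f v differentiable (at z)"
  shows "dirD (dirD f u) v z = dirD (dirD f v) u z"
proof -
  obtain A' where A': "(dirD f u has_derivative A') (at z)" using du unfolding differentiable_def by blast
  obtain B' where B': "(dirD f v has_derivative B') (at z)" using dv unfolding differentiable_def by blast
  have lA: "linear A'" using A' has_derivative_linear by blast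
  have lB: "linear B'" using B' has_derivative_linear by blast
  have main: "\<bar>A' v - B' u\<bar> \<le> e * (3 * (norm u + norm v))" if e: "e > 0" for e
  proof -
    obtain d0 where d0: "d0 > 0" "ball z d0 \<subseteq> S" using S openE by blast
    obtain d1 where d1: "d1 > 0" "\<forall>w. norm (w - z) < d1 \<longrightarrow> \<bar>dirD f u w - dirD f u z - A' (w - z)\<bar> \<le> e * norm (w - z)"
      using A' e unfolding has_derivative_at_alt by (auto simp: real_norm_def)
    obtain d2 where d2: "d2 > 0" "\<forall>w. norm (w - z) < d2 \<longrightarrow> \<bar>dirD f v w - dirD f v z - B' (w - z)\<bar> \<le> e * norm (w - z)"
      using B' e unfolding has_derivative_at_alt by (auto simp: real_norm_def)
    define K where "K = norm u + norm v + 1"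
    define dm where "dm = min d0 (min d1 d2)"
    define t where "t = dm / (2 * K)"
    have K0: "K > 0" unfolding K_def by (simp add: add_nonneg_pos)
    have dm0: "dm > 0" unfolding dm_def using d0 d1 d2 by simp
    have t0: "t > 0" unfolding t_def using K0 dm0 by simp
    have tK: "t * K < dm" unfolding t_def using K0 dm0 by (simp add: field_simps)
    have small: "t * (norm u + norm v) < dm"
      using tK t0 unfolding K_def by (simp add: algebra_simps)
    have sm0: "t * (norm u + norm v) < d0" and sm1: "t * (norm u + norm v) < d1"
      and sm2: "t * (norm u + norm v) < d2"
      using small unfolding dm_def by auto
    have nrm: "norm (a *\<^sub>R u + b *\<^sub>R v) < d0" if "0 \<le> a" "a \<le> t" "0 \<le> b" "b \<le> t" for a b
    proof -
      have "norm (a *\<^sub>R u + b *\<^sub>R v) \<le> a * norm u + b * norm v"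
        using norm_triangle_ineq[of "a *\<^sub>R u" "b *\<^sub>R v"] that by simp
      also have "\<dots> \<le> t * norm u + t * norm v" using that by (intro add_mono mult_right_mono) auto
      finally show ?thesis using sm0 by (simp add: algebra_simps)
    qed
    have inS: "z + (a *\<^sub>R u + b *\<^sub>R v) \<in> S" if "0 \<le> a" "a \<le> t" "0 \<le> b" "b \<le> t" for a b
    proof -
      have "dist z (z + (a *\<^sub>R u + b *\<^sub>R v)) < d0" using nrm[OF that] by (metis dist_norm norm_minus_commute add_diff_cancel_left')
      then show ?thesis using d0(2) by (auto simp: mem_ball)
    qed
    define \<phi> where "\<phi> s = f ((z + t *\<^sub>R v) + s *\<^sub>R u) - f (z + s *\<^sub>R u)" for s
    define \<psi> where "\<psi> s = f ((z + t *\<^sub>R u) + s *\<^sub>R v) - f (z + s *\<^sub>R v)" for s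
    have d\<phi>: "DERIV \<phi> s :> (dirD f u ((z + t *\<^sub>R v) + s *\<^sub>R u) - dirD f u (z + s *\<^sub>R u))"
      if "0 \<le> s" "s \<le> t" for s
    proof -
      have a: "(z + t *\<^sub>R v) + s *\<^sub>R u \<in> S" using inS[of s t] that t0 by (simp add: algebra_simps)
      have b: "z + s *\<^sub>R u \<in> S" using inS[of s 0] that t0 by simp
      show ?thesis unfolding \<phi>_def
        by (intro DERIV_diff line_deriv2 fd a b)
    qed
    have d\<psi>: "DERIV \<psi> s :> (dirD f v ((z + t *\<^sub>R u) + s *\<^sub>R v) - dirD f v (z + s *\<^sub>R v))"
      if "0 \<le> s" "s \<le> t" for s
    proof -
      have a: "(z + t *\<^sub>R u) + s *\<^sub>R v \<in> S" using inS[of t s] that t0 by (simp add: algebra_simps)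
      have b: "z + s *\<^sub>R v \<in> S" using inS[of 0 s] that t0 by simp
      show ?thesis unfolding \<psi>_def
        by (intro DERIV_diff line_deriv2 fd a b)
    qed
    obtain \<xi> where xi: "0 < \<xi>" "\<xi> < t"
      and mvA: "\<phi> t - \<phi> 0 = (t - 0) * (dirD f u ((z + t *\<^sub>R v) + \<xi> *\<^sub>R u) - dirD f u (z + \<xi> *\<^sub>R u))"
      using MVT2[OF t0 d\<phi>] by blast
    obtain \<eta> where eta: "0 < \<eta>" "\<eta> < t"
      and mvB: "\<psi> t - \<psi> 0 = (t - 0) * (dirD f v ((z + t *\<^sub>R u) + \<eta> *\<^sub>R v) - dirD f v (z + \<eta> *\<^sub>R v))"
      using MVT2[OF t0 d\<psi>] by blast
    have "\<phi> t - \<phi> 0 = \<psi> t - \<psi> 0" unfolding \<phi>_def \<psi>_def by (simp add: algebra_simps)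
    then have PAB: "dirD f u ((z + t *\<^sub>R v) + \<xi> *\<^sub>R u) - dirD f u (z + \<xi> *\<^sub>R u)
        = dirD f v ((z + t *\<^sub>R u) + \<eta> *\<^sub>R v) - dirD f v (z + \<eta> *\<^sub>R v)"
      using mvA mvB t0 by simp
    have EA: "\<bar>(dirD f u (z + t *\<^sub>R v + \<xi> *\<^sub>R u) - dirD f u (z + \<xi> *\<^sub>R u)) - t * A' v\<bar> \<le> e * t * (2 * norm u + norm v)"
      by (rule deriv_est[OF lA d1(2) e t0]) (use xi sm1 in auto)
    have EB: "\<bar>(dirD f v (z + t *\<^sub>R u + \<eta> *\<^sub>R v) - dirD f v (z + \<eta> *\<^sub>R v)) - t * B' u\<bar> \<le> e * t * (2 * norm v + norm u)"
      by (rule deriv_est[OF lB d2(2) e t0]) (use eta sm2 in \<open>auto simp: add.commute\<close>)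
    have "t * \<bar>A' v - B' u\<bar> \<le> e * t * (2 * norm u + norm v) + e * t * (2 * norm v + norm u)"
    proof -
      have "t * \<bar>A' v - B' u\<bar> = \<bar>t * A' v - t * B' u\<bar>"
        using t0 by (metis abs_mult abs_of_pos right_diff_distrib)
      also have "\<dots> \<le> \<bar>(dirD f u (z + t *\<^sub>R v + \<xi> *\<^sub>R u) - dirD f u (z + \<xi> *\<^sub>R u)) - t * A' v\<bar>
          + \<bar>(dirD f v (z + t *\<^sub>R u + \<eta> *\<^sub>R v) - dirD f v (z + \<eta> *\<^sub>R v)) - t * B' u\<bar>"
        using PAB by arith
      finally show ?thesis using EA EB by linarith
    qed
    also have "\<dots> = t * (e * (3 * (norm u + norm v)))" by (simp add: algebra_simps)
    finally show ?thesis using t0 by simp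
  qed
  have eq: "A' v = B' u"
  proof (rule ccontr)
    assume ne: "A' v \<noteq> B' u"
    define M where "M = 3 * (norm u + norm v)"
    have M0: "M \<ge> 0" unfolding M_def by simp
    define e where "e = \<bar>A' v - B' u\<bar> / (M + 1)"
    have e0: "e > 0" unfolding e_def using ne M0 by simp
    have "\<bar>A' v - B' u\<bar> \<le> e * M" using main[OF e0] unfolding M_def by simp
    moreover have "e * M < \<bar>A' v - B' u\<bar>" unfolding e_def using ne M0 by (simp add: field_simps)
    ultimately show False by simp
  qed
  show ?thesis using dirD_has[OF A'] dirD_has[OF B'] eq by simp
qed


section \<open>Smoothness in the fibre\<close>

definition smy :: "(real^'n::finite \<Rightarrow> real) \<Rightarrow> bool" where
  "smy G \<longleftrightarrow> (\<forall>vs. set vs \<subseteq> range (\<lambda>i. axis i (1::real)) \<longrightarrow> (\<forall>z. z \<noteq> 0 \<longrightarrow> iterD vs G differentiable (at z)))"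

lemma iter_slice:
  fixes L :: "real^'n::finite \<Rightarrow> real^'n \<Rightarrow> real"
  shows "iterD (map (\<lambda>v. (0::real^'n, v)) vs) (\<lambda>p. L (fst p) (snd p)) (x', z) = iterD vs (L x') z"
proof (induction vs arbitrary: x' z)
  case Nil
  then show ?case by simp
next
  case (Cons v vs)
  have "iterD (map (\<lambda>v. (0::real^'n, v)) (v # vs)) (\<lambda>p. L (fst p) (snd p)) (x', z)
      = deriv (\<lambda>t. iterD (map (\<lambda>v. (0::real^'n, v)) vs) (\<lambda>p. L (fst p) (snd p)) (x', z + t *\<^sub>R v)) 0"
    by (simp add: dirD_def)
  also have "\<dots> = deriv (\<lambda>t. iterD vs (L x') (z + t *\<^sub>R v)) 0" by (simp only: Cons.IH)
  also have "\<dots> = iterD (v # vs) (L x') z" by (simp add: dirD_def)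
  finally show ?case .
qed

lemma smy_finsler:
  fixes L :: "real^'n::finite \<Rightarrow> real^'n \<Rightarrow> real"
  assumes FL: "finsler_on U L" and x: "x \<in> U"
  shows "smy (L x)"
  unfolding smy_def
proof (intro allI impI)
  fix vs :: "(real^'n) list" and z :: "real^'n"
  assume vs: "set vs \<subseteq> range (\<lambda>i. axis i (1::real))" and z: "z \<noteq> 0"
  let ?\<Phi> = "\<lambda>p::(real^'n) \<times> (real^'n). L (fst p) (snd p)"
  let ?vs' = "map (\<lambda>v. (0::real^'n, v)) vs"
  have sm: "smooth_on {p :: (real^'n) \<times> (real^'n). fst p \<in> U \<and> snd p \<noteq> 0} ?\<Phi>"
    using FL unfolding finsler_on_def by blast
  have b: "set ?vs' \<subseteq> Basis"
  proof
    fix w assume "w \<in> set ?vs'"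
    then obtain i where "w = (0, axis i 1)" using vs by auto
    then show "w \<in> Basis" by (auto simp: Basis_prod_def)
  qed
  have d: "iterD ?vs' ?\<Phi> differentiable (at (x, z))"
    using sm b x z unfolding smooth_on_def by auto
  have e: "iterD vs (L x) = (\<lambda>w. iterD ?vs' ?\<Phi> (x, w))"
    by (rule ext) (simp only: iter_slice)
  have p: "(\<lambda>w. (x, w)) differentiable (at z)"
  proof -
    have "((\<lambda>w::real^'n. (x, w)) has_derivative (\<lambda>h. (0, h))) (at z)"
      by (auto intro!: derivative_eq_intros)
    then show ?thesis unfolding differentiable_def by blast
  qed
  show "iterD vs (L x) differentiable (at z)"
    unfolding e by (rule differentiable_compose[OF _ p]) (use d in simp)
qed

lemma smy_d0: "smy G \<Longrightarrow> z \<noteq> 0 \<Longrightarrow> G differentiable (at z)"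
  unfolding smy_def by (metis empty_subsetI iterD.simps(1) list.set(1))

lemma smy_d1: "smy G \<Longrightarrow> z \<noteq> 0 \<Longrightarrow> pdy j G differentiable (at z)"
proof -
  assume "smy G" "z \<noteq> 0"
  moreover have "set [axis j (1::real)] \<subseteq> range (\<lambda>i. axis i (1::real))" by auto
  ultimately have "iterD [axis j 1] G differentiable (at z)" unfolding smy_def by blast
  then show ?thesis by (simp add: pdy_def)
qed

lemma smy_d2: "smy G \<Longrightarrow> z \<noteq> 0 \<Longrightarrow> pdy i (pdy j G) differentiable (at z)"
proof -
  assume "smy G" "z \<noteq> 0"
  moreover have "set [axis i (1::real), axis j 1] \<subseteq> range (\<lambda>i. axis i (1::real))" by auto
  ultimately have "iterD [axis i 1, axis j 1] G differentiable (at z)" unfolding smy_def by blast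
  then show ?thesis by (simp add: pdy_def)
qed

lemma open_nz: "open (-{0::real^'n::finite})" by (simp add: open_Compl)

lemma dirD_cmul:
  fixes f :: "'a::real_normed_vector \<Rightarrow> real"
  assumes "f differentiable (at z)"
  shows "dirD (\<lambda>w. a * f w) v z = a * dirD f v z"
  using dirD_aff[OF assms, of a 0 v] by simp

lemma fund_formula:
  assumes G: "smy G" and z: "z \<noteq> 0"
  shows "fund G i j z = pdy i G z * pdy j G z + G z * pdy i (pdy j G) z"
proof -
  have sq: "pdy j (\<lambda>w. (G w)^2) w = G w * (2 * pdy j G w)" if "w \<noteq> 0" for w
  proof -
    have "pdy j (\<lambda>w. (G w)^2) w = dirD (\<lambda>w. G w * G w) (axis j 1) w"
      by (simp add: pdy_def power2_eq_square)
    also have "\<dots> = G w * (2 * pdy j G w)"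
      using dirD_mul[OF smy_d0[OF G that] smy_d0[OF G that]] by (simp add: pdy_def)
    finally show ?thesis .
  qed
  have "fund G i j z = 1/2 * pdy i (\<lambda>w. G w * (2 * pdy j G w)) z"
    unfolding fund_def pdy_def
    by (subst dirD_cong[OF open_nz, of z "dirD (\<lambda>z. (G z)\<^sup>2) (axis j 1)" "\<lambda>w. G w * (2 * pdy j G w)"])
       (use z sq in \<open>auto simp: pdy_def\<close>)
  also have "\<dots> = 1/2 * (pdy i G z * (2 * pdy j G z) + G z * (2 * pdy i (pdy j G) z))"
  proof -
    have d2: "(\<lambda>w. 2 * pdy j G w) differentiable (at z)"
      using smy_d1[OF G z] by simp
    show ?thesis unfolding pdy_def
      using dirD_mul[OF smy_d0[OF G z] d2] dirD_cmul[OF smy_d1[OF G z], of 2] by (simp add: pdy_def)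
  qed
  finally show ?thesis by simp
qed

lemma cten_formula:
  assumes G: "smy G" and z: "z \<noteq> 0"
  shows "cten G i j k z = (pdy k (pdy i G) z * pdy j G z + pdy i G z * pdy k (pdy j G) z
      + pdy k G z * pdy i (pdy j G) z + G z * pdy k (pdy i (pdy j G)) z) / 2"
proof -
  have "cten G i j k z = 1/2 * pdy k (\<lambda>w. pdy i G w * pdy j G w + G w * pdy i (pdy j G) w) z"
    unfolding cten_def pdy_def
    by (subst dirD_cong[OF open_nz, of z "fund G i j" "\<lambda>w. pdy i G w * pdy j G w + G w * pdy i (pdy j G) w"])
       (use z fund_formula[OF G] in \<open>auto simp: pdy_def\<close>)
  also have "pdy k (\<lambda>w. pdy i G w * pdy j G w + G w * pdy i (pdy j G) w) z
      = pdy k (pdy i G) z * pdy j G z + pdy i G z * pdy k (pdy j G) z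
      + (pdy k G z * pdy i (pdy j G) z + G z * pdy k (pdy i (pdy j G)) z)"
  proof -
    have a: "(\<lambda>w. pdy i G w * pdy j G w) differentiable (at z)"
      using smy_d1[OF G z, of i] smy_d1[OF G z, of j] by simp
    have b: "(\<lambda>w. G w * pdy i (pdy j G) w) differentiable (at z)"
      using smy_d0[OF G z] smy_d2[OF G z, of i j] by simp
    show ?thesis unfolding pdy_def
      using dirD_add[OF a b] dirD_mul[OF smy_d1[OF G z, of i] smy_d1[OF G z, of j]]
        dirD_mul[OF smy_d0[OF G z] smy_d2[OF G z, of i j]]
      by (simp add: pdy_def)
  qed
  finally show ?thesis by simp
qed

lemma Q_sym:
  assumes G: "smy G" and z: "z \<noteq> 0"
  shows "pdy i (pdy j G) z = pdy j (pdy i G) z"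
  unfolding pdy_def
  by (rule schwarz[OF open_nz]) (use z smy_d0[OF G] smy_d1[OF G] in \<open>auto simp: pdy_def\<close>)

lemma R_sym1:
  assumes G: "smy G" and z: "z \<noteq> 0"
  shows "pdy k (pdy i (pdy j G)) z = pdy k (pdy j (pdy i G)) z"
  unfolding pdy_def
  by (rule dirD_cong[OF open_nz]) (use z Q_sym[OF G] in \<open>auto simp: pdy_def\<close>)

lemma R_sym2:
  assumes G: "smy G" and z: "z \<noteq> 0"
  shows "pdy k (pdy i (pdy j G)) z = pdy i (pdy k (pdy j G)) z"
  unfolding pdy_def
  by (rule schwarz[OF open_nz]) (use z smy_d1[OF G] smy_d2[OF G] in \<open>auto simp: pdy_def\<close>)


section \<open>Homogeneity and Euler\<close>

lemma hom_deriv: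
  fixes G :: "real^'n::finite \<Rightarrow> real"
  assumes d: "G differentiable (at z)" and z: "z \<noteq> 0" and t: "t > 0"
    and hom: "\<And>w. w \<noteq> 0 \<Longrightarrow> G (t *\<^sub>R w) = c * G w"
  shows "dirD G v (t *\<^sub>R z) = c / t * dirD G v z"
proof -
  obtain G' where G': "(G has_derivative G') (at z)" using d unfolding differentiable_def by blast
  have lin: "linear G'" using G' has_derivative_linear by blast
  have h: "((\<lambda>s. c * G (z + s *\<^sub>R ((1/t) *\<^sub>R v))) has_real_derivative c * G' ((1/t) *\<^sub>R v)) (at 0)"
    using line_deriv[of G G' z 0 "(1/t) *\<^sub>R v"] G' by (auto intro!: DERIV_cmult)
  have op: "open ((\<lambda>s::real. z + s *\<^sub>R ((1/t) *\<^sub>R v)) -` (-{0}))"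
    by (rule continuous_open_vimage[OF open_nz]) (intro continuous_intros)
  have "eventually (\<lambda>s. s \<in> (\<lambda>s::real. z + s *\<^sub>R ((1/t) *\<^sub>R v)) -` (-{0})) (nhds (0::real))"
    by (rule eventually_nhds_in_open[OF op]) (simp add: z)
  then have ev: "eventually (\<lambda>s. G (t *\<^sub>R z + s *\<^sub>R v) = c * G (z + s *\<^sub>R ((1/t) *\<^sub>R v))) (nhds (0::real))"
  proof eventually_elim
    case (elim s)
    have "t *\<^sub>R z + s *\<^sub>R v = t *\<^sub>R (z + s *\<^sub>R ((1/t) *\<^sub>R v))" using t by (simp add: algebra_simps)
    then show ?case using hom[of "z + s *\<^sub>R ((1/t) *\<^sub>R v)"] elim by simp
  qed
  have "((\<lambda>s. G (t *\<^sub>R z + s *\<^sub>R v)) has_real_derivative c * G' ((1/t) *\<^sub>R v)) (at 0)"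
    using h DERIV_cong_ev[OF refl ev refl] by simp
  then have "dirD G v (t *\<^sub>R z) = c * G' ((1/t) *\<^sub>R v)" unfolding dirD_def by (rule DERIV_imp_deriv)
  also have "\<dots> = c / t * G' v" using linear_scale[OF lin] by simp
  also have "G' v = dirD G v z" using dirD_has[OF G'] by simp
  finally show ?thesis .
qed

lemma euler:
  fixes G :: "real^'n::finite \<Rightarrow> real"
  assumes d: "G differentiable (at z)"
    and hom: "\<And>s. s > 0 \<Longrightarrow> G (s *\<^sub>R z) = \<phi> s * G z"
    and d\<phi>: "(\<phi> has_real_derivative dd) (at 1)"
  shows "(\<Sum>i\<in>UNIV. pdy i G z * z $ i) = dd * G z"
proof -
  obtain G' where G': "(G has_derivative G') (at z)" using d unfolding differentiable_def by blast
  have lin: "linear G'" using G' has_derivative_linear by blast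
  have h1: "((\<lambda>s. G (z + s *\<^sub>R z)) has_real_derivative G' z) (at 0)"
    using line_deriv[of G G' z 0 z] G' by simp
  have h2: "((\<lambda>s. \<phi> (1 + s) * G z) has_real_derivative dd * G z) (at 0)"
  proof -
    have "((\<lambda>s. \<phi> (1 + s)) has_real_derivative dd * 1) (at 0)"
      by (rule DERIV_chain2[of \<phi>]) (use d\<phi> in simp, auto intro!: derivative_eq_intros)
    then show ?thesis by (auto intro!: DERIV_cmult_right[where c = "G z", simplified])
  qed
  have op: "open {s::real. s > -1}" by (simp add: open_greaterThan[unfolded greaterThan_def])
  have ev: "eventually (\<lambda>s. G (z + s *\<^sub>R z) = \<phi> (1 + s) * G z) (nhds (0::real))"
  proof -
    have "eventually (\<lambda>s::real. s \<in> {s. s > -1}) (nhds 0)"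
      using op by (intro eventually_nhds_in_open) auto
    then show ?thesis
    proof eventually_elim
      case (elim s)
      have "z + s *\<^sub>R z = (1 + s) *\<^sub>R z" by (simp add: algebra_simps)
      then show ?case using hom[of "1 + s"] elim by simp
    qed
  qed
  have "((\<lambda>s. G (z + s *\<^sub>R z)) has_real_derivative dd * G z) (at 0)"
    using h2 DERIV_cong_ev[OF refl ev refl] by simp
  then have eq: "G' z = dd * G z" using h1 DERIV_unique by blast
  have zexp: "z = (\<Sum>i\<in>UNIV. z $ i *\<^sub>R axis i 1)"
    using basis_expansion[of z] by (simp add: scalar_mult_eq_scaleR)
  have "G' z = (\<Sum>i\<in>UNIV. z $ i * G' (axis i 1))"
    by (subst zexp) (simp add: linear_sum[OF lin] linear_scale[OF lin])
  also have "\<dots> = (\<Sum>i\<in>UNIV. pdy i G z * z $ i)"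
    by (simp add: pdy_def dirD_has[OF G'] mult.commute)
  finally show ?thesis using eq by simp
qed




theorem lemma5:
  fixes U :: "(real^'n::finite) set"
    and L :: "real^'n \<Rightarrow> real^'n \<Rightarrow> real"
    and \<sigma> :: "real^'n \<Rightarrow> real"
    and b :: "real^'n \<Rightarrow> real^'n"
  assumes n: "CARD('n) > 3"
    and FL: "finsler_on U L"
    and sig: "smooth_on U \<sigma>"
    and bsm: "\<forall>i. smooth_on U (\<lambda>x. b x $ i)"
    and FLs: "finsler_on U (conf_beta \<sigma> b L)"
  shows "\<forall>x\<in>U. \<forall>y. y \<noteq> 0 \<longrightarrow> (\<forall>i j.
           Mten (conf_beta \<sigma> b L x) i j y =
             Mten (L x) i j y
             - Hten (L x) (conf_beta \<sigma> b L x) (b x) i j y / (2 * conf_beta \<sigma> b L x y))"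
proof (intro ballI allI impI)
  fix x y i j
  assume x: "x \<in> U" and y: "(y::real^'n) \<noteq> 0"
  define F where "F = L x"
  define Fs where "Fs = conf_beta \<sigma> b L x"
  define a where "a = exp (\<sigma> x)"
  define bv where "bv = b x"
  have Fs_eq: "Fs = (\<lambda>w. a * F w + betaf bv w)"
    by (simp add: Fs_def conf_beta_def F_def a_def bv_def fun_eq_iff)
  have smF: "smy F" unfolding F_def by (rule smy_finsler[OF FL x])
  have smFs: "smy Fs" unfolding Fs_def by (rule smy_finsler[OF FLs x])
  have F0: "F y > 0" using FL x y unfolding finsler_on_def F_def by blast
  have Fs0: "Fs y > 0" using FLs x y unfolding finsler_on_def Fs_def by blast
  have a0: "a > 0" unfolding a_def by simp
  have homF: "\<And>w s. w \<noteq> 0 \<Longrightarrow> s > 0 \<Longrightarrow> F (s *\<^sub>R w) = s * F w"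
    using FL x unfolding finsler_on_def F_def by blast
  have Fsy: "Fs y = a * F y + betaf bv y" by (simp add: Fs_eq)
  have l1: "pdy j Fs w = a * pdy j F w + bv $ j" if "w \<noteq> 0" for j w
    unfolding pdy_def Fs_eq by (rule dirD_conf[OF smy_d0[OF smF that]])
  have QFs: "pdy i (pdy j Fs) w = a * pdy i (pdy j F) w" if "w \<noteq> 0" for i j w
  proof -
    have "pdy i (pdy j Fs) w = dirD (\<lambda>w. a * pdy j F w + bv $ j) (axis i 1) w"
      unfolding pdy_def[of i] by (rule dirD_cong[OF open_nz]) (use that l1 in auto)
    also have "\<dots> = a * pdy i (pdy j F) w"
      unfolding pdy_def[of i] by (rule dirD_aff[OF smy_d1[OF smF that]])
    finally show ?thesis .
  qed
  have RFs: "pdy k (pdy i (pdy j Fs)) y = a * pdy k (pdy i (pdy j F)) y" for i j k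
  proof -
    have "pdy k (pdy i (pdy j Fs)) y = dirD (\<lambda>w. a * pdy i (pdy j F) w) (axis k 1) y"
      unfolding pdy_def[of k] by (rule dirD_cong[OF open_nz]) (use y QFs in auto)
    also have "\<dots> = a * pdy k (pdy i (pdy j F)) y"
      unfolding pdy_def[of k] by (rule dirD_cmul[OF smy_d2[OF smF y]])
    finally show ?thesis .
  qed
  have lsd: "lcov Fs i y = a * lcov F i y + bv $ i" for i
    unfolding lcov_def by (rule l1[OF y])
  have fF: "fund F i j y = lcov F i y * lcov F j y + F y * pdy i (pdy j F) y" for i j
    unfolding lcov_def by (rule fund_formula[OF smF y])
  have cF: "cten F i j k y = (pdy k (pdy i F) y * lcov F j y + lcov F i y * pdy k (pdy j F) y
      + lcov F k y * pdy i (pdy j F) y + F y * pdy k (pdy i (pdy j F)) y) / 2" for i j k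
    unfolding lcov_def by (rule cten_formula[OF smF y])
  have fFs: "fund Fs i j y = lcov Fs i y * lcov Fs j y + Fs y * a * pdy i (pdy j F) y" for i j
    unfolding lcov_def using fund_formula[OF smFs y, of i j] QFs[OF y, of i j] by (simp add: mult.assoc)
  have cFs: "cten Fs i j k y = (a * pdy k (pdy i F) y * lcov Fs j y + lcov Fs i y * (a * pdy k (pdy j F) y)
      + lcov Fs k y * (a * pdy i (pdy j F) y) + Fs y * (a * pdy k (pdy i (pdy j F)) y)) / 2" for i j k
    unfolding lcov_def using cten_formula[OF smFs y, of i j k] QFs[OF y] RFs by simp
  have Qs: "pdy i (pdy j F) y = pdy j (pdy i F) y" for i j by (rule Q_sym[OF smF y])
  have Rs: "sym3 (\<lambda>i j k. pdy k (pdy i (pdy j F)) y)"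
    unfolding sym3_def
  proof (intro allI conjI)
    fix i j k
    show "pdy k (pdy i (pdy j F)) y = pdy k (pdy j (pdy i F)) y" by (rule R_sym1[OF smF y])
    have "pdy k (pdy i (pdy j F)) y = pdy k (pdy j (pdy i F)) y" by (rule R_sym1[OF smF y])
    also have "\<dots> = pdy j (pdy k (pdy i F)) y" by (rule R_sym2[OF smF y])
    also have "\<dots> = pdy j (pdy i (pdy k F)) y" by (rule R_sym1[OF smF y])
    finally show "pdy k (pdy i (pdy j F)) y = pdy j (pdy i (pdy k F)) y" .
  qed
  have hom1: "pdy j F (s *\<^sub>R w) = 1 * pdy j F w" if "w \<noteq> 0" "s > 0" for j s w
    using hom_deriv[OF smy_d0[OF smF that(1)] that(1) that(2), where c = s] homF that by (simp add: pdy_def)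
  have hom2: "pdy i (pdy j F) (s *\<^sub>R w) = 1 / s * pdy i (pdy j F) w" if "w \<noteq> 0" "s > 0" for i j s w
    using hom_deriv[OF smy_d1[OF smF that(1), of j] that(1) that(2), where c = 1] hom1 that by (simp add: pdy_def)
  have E1: "(\<Sum>i\<in>UNIV. lcov F i y * y $ i) = F y"
    using euler[OF smy_d0[OF smF y], where \<phi> = "\<lambda>s. s" and dd = 1] homF[OF y] unfolding lcov_def
    by (auto intro!: derivative_eq_intros)
  have E2: "(\<Sum>i\<in>UNIV. pdy i (pdy j F) y * y $ i) = 0" for j
    using euler[OF smy_d1[OF smF y, of j], where \<phi> = "\<lambda>s. 1" and dd = 0] hom1[OF y] by (auto intro!: derivative_eq_intros)
  have E3: "(\<Sum>k\<in>UNIV. pdy k (pdy i (pdy j F)) y * y $ k) = - pdy i (pdy j F) y" for i j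
  proof -
    have d: "((\<lambda>s::real. 1 / s) has_real_derivative -1) (at 1)"
      by (auto intro!: derivative_eq_intros)
    show ?thesis using euler[OF smy_d2[OF smF y, of i j] _ d] hom2[OF y] by simp
  qed
  have invF: "invertible (gmat F y)"
    by (rule posdef_invertible) (use FL x y in \<open>auto simp: finsler_on_def F_def gmat_def\<close>)
  have invFs: "invertible (gmat Fs y)"
    by (rule posdef_invertible) (use FLs x y in \<open>auto simp: finsler_on_def Fs_def gmat_def\<close>)
  have "Mten Fs i j y = Mten F i j y - Hten F Fs bv i j y / (2 * Fs y)"
    by (rule main_alg[OF n F0 Fs0 a0 Fsy lsd fF cF fFs cFs Qs Rs E1 E2 E3 invF invFs])
  then show "Mten (conf_beta \<sigma> b L x) i j y =
             Mten (L x) i j y - Hten (L x) (conf_beta \<sigma> b L x) (b x) i j y / (2 * conf_beta \<sigma> b L x y)"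
    by (simp add: F_def Fs_def bv_def)
qed


end
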